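(* Fix $\epsilon>0$ and an integer $L\geq 2$ with $2\epsilon<1/L$. (1) If $L=2$, then $\log\frac{1}{\epsilon}\leq N^*(\epsilon,1/L,L)\leq \log\frac{1}{\epsilon}+4$. (2) If $L\geq 3$, then $\log\frac{1}{L\epsilon}+2L-4\leq N^*(\epsilon,1/L,L)\leq \log\frac{1}{L\epsilon}+2L$.
   Context: Private sequential learning model. An unknown true value $v^*\in[0,1)$. A learner submits queries $q_k\in[0,1)$ and receives responses $r_k=\mathbb{I}(v^*\geq q_k)$. A learner strategy $\phi$ of length $N$ uses a random seed $Y$ uniformly distributed on $\{1,2,\dots,\mathcal{Y}\}$ and consists of query functions and an estimation function: $q_1=\phi_1(Y)$, $q_k=\phi_k(r_1,\dots,r_{k-1},Y)$, and estimate $\hat x=\phi^E(r_1,\dots,r_N,Y)\in[0,1)$; queries within a run are distinct. $\Phi_N$ is the set of such strategies of length $N$; $\hat x(x,y)$ is the estimate when $v^*=x,Y=y$. $\mathcal{Q}(x)$ is the set of query sequences $\overline q\in[0,1)^N$ having positive probability (over $Y$) when $v^*=x$; the information set is $\mathcal{I}(\overline q)=\{x\in[0,1):\overline q\in\mathcal{Q}(x)\}$. The $\delta$-cover number $C_\delta(\mathcal{E})$ of a set $\mathcal{E}\subset\mathbb{R}$ is the least number of closed intervals of length at most $\delta$ whose union contains $\mathcal{E}$. A strategy is $(\epsilon,\delta,L)$-private if $\mathbb{P}(|\hat x(x,Y)-x|\leq\epsilon/2)=1$ for all $x\in[0,1)$ and $C_\delta(\mathcal{I}(\overline q))\geq L$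 for all $x\in[0,1)$ and all $\overline q\in\mathcal{Q}(x)$. $N^*(\epsilon,\delta,L)$ is the minimal $N$ such that $\Phi_N$ contains an $(\epsilon,\delta,L)$-private strategy. Logarithms are base 2 and non-integer quantities are rounded up to the nearest integer. *)

theory Defs
  imports Complex_Main
begin

text \<open>A learner strategy of length N: seed space {1..Yc} (Y uniform), query function
  qf y rs = next query given seed y and previous responses rs, and estimator
  est y rs = estimate given seed y and all N responses.\<close>

fun resps :: "(nat \<Rightarrow> bool list \<Rightarrow> real) \<Rightarrow> real \<Rightarrow> nat \<Rightarrow> nat \<Rightarrow> bool list" where
  "resps qf x y 0 = []"
| "resps qf x y (Suc k) = (let rs = resps qf x y k in rs @ [x \<ge> qf y rs])"

definition queries :: "(nat \<Rightarrow> bool list \<Rightarrow> real) \<Rightarrow> nat \<Rightarrow> real \<Rightarrow> nat \<Rightarrow> real list" where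
  "queries qf N x y = map (\<lambda>k. qf y (resps qf x y k)) [0..<N]"

definition estimate :: "(nat \<Rightarrow> bool list \<Rightarrow> real) \<Rightarrow> (nat \<Rightarrow> bool list \<Rightarrow> real) \<Rightarrow> nat \<Rightarrow> real \<Rightarrow> nat \<Rightarrow> real" where
  "estimate qf est N x y = est y (resps qf x y N)"

definition is_strategy :: "nat \<Rightarrow> nat \<Rightarrow> (nat \<Rightarrow> bool list \<Rightarrow> real) \<Rightarrow> (nat \<Rightarrow> bool list \<Rightarrow> real) \<Rightarrow> bool" where
  "is_strategy N Yc qf est \<longleftrightarrow>
     Yc \<ge> 1 \<and>
     (\<forall>y\<in>{1..Yc}. \<forall>rs. length rs < N \<longrightarrow> qf y rs \<in> {0..<1}) \<and>
     (\<forall>y\<in>{1..Yc}. \<forall>rs. length rs = N \<longrightarrow> est y rs \<in> {0..<1}) \<and>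
     (\<forall>x\<in>{0..<1}. \<forall>y\<in>{1..Yc}. distinct (queries qf N x y))"

text \<open>Q(x): query sequences with positive probability over uniform Y when v* = x.\<close>
definition Qset :: "nat \<Rightarrow> nat \<Rightarrow> (nat \<Rightarrow> bool list \<Rightarrow> real) \<Rightarrow> real \<Rightarrow> real list set" where
  "Qset N Yc qf x = {queries qf N x y | y. y \<in> {1..Yc}}"

definition info_set :: "nat \<Rightarrow> nat \<Rightarrow> (nat \<Rightarrow> bool list \<Rightarrow> real) \<Rightarrow> real list \<Rightarrow> real set" where
  "info_set N Yc qf qs = {x \<in> {0..<1}. qs \<in> Qset N Yc qf x}"

definition cover_number :: "real \<Rightarrow> real set \<Rightarrow> nat" where
  "cover_number \<delta> E = (LEAST n. \<exists>a b :: nat \<Rightarrow> real.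
       (\<forall>i<n. a i \<le> b i \<and> b i - a i \<le> \<delta>) \<and> E \<subseteq> (\<Union>i<n. {a i..b i}))"

definition is_private :: "real \<Rightarrow> real \<Rightarrow> nat \<Rightarrow> nat \<Rightarrow> nat \<Rightarrow> (nat \<Rightarrow> bool list \<Rightarrow> real) \<Rightarrow> (nat \<Rightarrow> bool list \<Rightarrow> real) \<Rightarrow> bool" where
  "is_private \<epsilon> \<delta> L N Yc qf est \<longleftrightarrow>
     (\<forall>x\<in>{0..<1}. \<forall>y\<in>{1..Yc}. \<bar>estimate qf est N x y - x\<bar> \<le> \<epsilon> / 2) \<and>
     (\<forall>x\<in>{0..<1}. \<forall>qs\<in>Qset N Yc qf x. cover_number \<delta> (info_set N Yc qf qs) \<ge> L)"

definition Nstar :: "real \<Rightarrow> real \<Rightarrow> nat \<Rightarrow> nat" where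
  "Nstar \<epsilon> \<delta> L = (LEAST N. \<exists>Yc qf est. is_strategy N Yc qf est \<and> is_private \<epsilon> \<delta> L N Yc qf est)"

end

theory Submission
  imports Defs
begin


lemma length_resps[simp]: "length (resps qf x y k) = k"
  by (induction k) (auto simp: Let_def)

lemma resps_take: "k \<le> n \<Longrightarrow> take k (resps qf x y n) = resps qf x y k"
proof (induction n)
  case 0 then show ?case by simp
next
  case (Suc n)
  show ?case
  proof (cases "k = Suc n")
    case True then show ?thesis by (metis length_resps order_refl take_all)
  next
    case False
    then have "k \<le> n" using Suc.prems by simp
    then show ?thesis using Suc.IH by (simp add: Let_def)
  qed
qed

lemma resps_nth: "k < n \<Longrightarrow> resps qf x y n ! k = (x \<ge> qf y (resps qf x y k))"
proof (induction n)
  case 0 then show ?case by simp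
next
  case (Suc n)
  show ?case
  proof (cases "k = n")
    case True then show ?thesis by (simp add: Let_def nth_append)
  next
    case False
    then have "k < n" using Suc.prems by simp
    then show ?thesis using Suc.IH by (simp add: Let_def nth_append)
  qed
qed

lemma queries_nth: "k < N \<Longrightarrow> queries qf N x y ! k = qf y (resps qf x y k)"
  by (simp add: queries_def)

lemma length_queries[simp]: "length (queries qf N x y) = N"
  by (simp add: queries_def)

lemma same_side_resps:
  assumes "\<forall>s\<in>set (queries qf N x y). (x \<ge> s) = (x' \<ge> s)"
  shows "k \<le> N \<Longrightarrow> resps qf x' y k = resps qf x y k"
proof (induction k)
  case 0 then show ?case by simp
next
  case (Suc k)
  then have eq: "resps qf x' y k = resps qf x y k" by simp
  have "qf y (resps qf x y k) \<in> set (queries qf N x y)"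
    using Suc.prems by (auto simp: queries_def)
  then have "(x \<ge> qf y (resps qf x y k)) = (x' \<ge> qf y (resps qf x y k))" using assms by blast
  then show ?case using eq by (simp add: Let_def)
qed

lemma same_side_estimate:
  assumes "\<forall>s\<in>set (queries qf N x y). (x \<ge> s) = (x' \<ge> s)"
  shows "estimate qf est N x' y = estimate qf est N x y"
  using same_side_resps[OF assms, of N] by (simp add: estimate_def)

lemma same_side_queries:
  assumes "\<forall>s\<in>set (queries qf N x y). (x \<ge> s) = (x' \<ge> s)"
  shows "queries qf N x' y = queries qf N x y"
  using same_side_resps[OF assms] by (simp add: queries_def)

definition cov :: "real \<Rightarrow> real set \<Rightarrow> nat \<Rightarrow> bool" where
  "cov \<delta> E n \<longleftrightarrow> (\<exists>a b :: nat \<Rightarrow> real.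
       (\<forall>i<n. a i \<le> b i \<and> b i - a i \<le> \<delta>) \<and> E \<subseteq> (\<Union>i<n. {a i..b i}))"

lemma cover_number_cov: "cover_number \<delta> E = (LEAST n. cov \<delta> E n)"
  by (simp add: cover_number_def cov_def)

lemma cov_le: "cov \<delta> E n \<Longrightarrow> cover_number \<delta> E \<le> n"
  unfolding cover_number_cov by (rule Least_le)

lemma cov_unit:
  assumes "E \<subseteq> {0..<1}" "L \<ge> 1"
  shows "cov (1 / real L) E L"
  unfolding cov_def
proof (intro exI conjI allI impI)
  fix i assume "i < L"
  show "real i / real L \<le> (real i + 1) / real L" using assms by (simp add: divide_right_mono)
  show "(real i + 1) / real L - real i / real L \<le> 1 / real L" by (simp add: diff_divide_distrib[symmetric])
next
  show "E \<subseteq> (\<Union>i<L. {real i / real L..(real i + 1) / real L})"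
  proof
    fix x assume "x \<in> E"
    then have x: "0 \<le> x" "x < 1" using assms by auto
    define i where "i = nat \<lfloor>x * real L\<rfloor>"
    have Lp: "real L > 0" using assms by simp
    have f0: "\<lfloor>x * real L\<rfloor> \<ge> 0" using x Lp by simp
    have ri: "real i = of_int \<lfloor>x * real L\<rfloor>" using f0 by (simp add: i_def)
    have "real i \<le> x * real L" using ri by linarith
    then have a: "real i / real L \<le> x" using Lp by (simp add: divide_le_eq)
    have "x * real L < real i + 1" using ri by linarith
    then have b: "x \<le> (real i + 1) / real L" using Lp by (simp add: le_divide_eq)
    have "x * real L < real L" using x Lp by simp
    then have "real i < real L" using ri by linarith
    then have "i < L" by simp
    then show "x \<in> (\<Union>i<L. {real i / real L..(real i + 1) / real L})" using a b by auto
  qed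
qed

lemma cover_number_ge:
  assumes ex: "cov \<delta> E n0"
    and pts: "\<forall>i<L. p i \<in> E" and gap: "\<forall>i j. i < j \<longrightarrow> j < L \<longrightarrow> p j - p i > \<delta>"
  shows "cover_number \<delta> E \<ge> L"
proof -
  have "n \<ge> L" if c: "cov \<delta> E n" for n
  proof -
    from c obtain a b where ab: "\<forall>i<n. a i \<le> b i \<and> b i - a i \<le> \<delta>" "E \<subseteq> (\<Union>i<n. {a i..b i})"
      unfolding cov_def by blast
    have "\<forall>i<L. \<exists>k<n. p i \<in> {a k..b k}" using pts ab(2) by blast
    then obtain f where f: "\<forall>i<L. f i < n \<and> p i \<in> {a (f i)..b (f i)}" by metis
    have "inj_on f {..<L}"
    proof (rule inj_onI)
      fix i j assume i: "i \<in> {..<L}" and j: "j \<in> {..<L}" and e: "f i = f j"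
      show "i = j"
      proof (rule ccontr)
        assume "i \<noteq> j"
        then consider "i < j" | "j < i" by linarith
        then show False
        proof cases
          case 1
          have "p j - p i > \<delta>" using gap 1 j by auto
          moreover have "p j - p i \<le> \<delta>"
          proof -
            have "p i \<in> {a (f i)..b (f i)}" "p j \<in> {a (f i)..b (f i)}" "b (f i) - a (f i) \<le> \<delta>"
              using f i j e ab(1) by auto
            then show ?thesis by auto
          qed
          ultimately show False by simp
        next
          case 2
          have "p i - p j > \<delta>" using gap 2 i by auto
          moreover have "p i - p j \<le> \<delta>"
          proof -
            have "p i \<in> {a (f i)..b (f i)}" "p j \<in> {a (f i)..b (f i)}" "b (f i) - a (f i) \<le> \<delta>"
              using f i j e ab(1) by auto
            then show ?thesis by auto
          qed
          ultimately show False by simp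
        qed
      qed
    qed
    moreover have "f ` {..<L} \<subseteq> {..<n}" using f by auto
    ultimately have "card {..<L} \<le> card {..<n}" by (meson card_inj_on_le finite_lessThan)
    then show ?thesis by simp
  qed
  then show ?thesis unfolding cover_number_cov using ex by (metis LeastI)
qed



lemma cov_empty: "\<delta> \<ge> 0 \<Longrightarrow> cov \<delta> {} n"
  unfolding cov_def by (rule exI[of _ "\<lambda>_. 0"], rule exI[of _ "\<lambda>_. 0"]) simp

lemma cover_points:
  assumes "\<delta> > 0"
  shows "bdd_below E \<Longrightarrow> \<not> cov \<delta> E n \<Longrightarrow>
    \<exists>p. (\<forall>i<Suc n. p i \<in> E) \<and> (\<forall>i j. i < j \<longrightarrow> j < Suc n \<longrightarrow> p j - p i > \<delta>)"
proof (induction n arbitrary: E)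
  case 0
  then have "E \<noteq> {}" using cov_empty[of \<delta> 0] assms by auto
  then obtain e where "e \<in> E" by auto
  then show ?case by (intro exI[of _ "\<lambda>_. e"]) auto
next
  case (Suc n)
  have ne: "E \<noteq> {}"
  proof
    assume "E = {}"
    then have "cov \<delta> E (Suc n)" using cov_empty[of \<delta>] assms by simp
    then show False using Suc.prems by simp
  qed
  define m where "m = Inf E"
  define E' where "E' = E \<inter> {m + \<delta><..}"
  have E'bdd: "bdd_below E'" using Suc.prems(1) unfolding E'_def by (meson bdd_below_Int1)
  have ncov: "\<not> cov \<delta> E' n"
  proof
    assume "cov \<delta> E' n"
    then obtain a b where ab: "\<forall>i<n. a i \<le> b i \<and> b i - a i \<le> \<delta>" "E' \<subseteq> (\<Union>i<n. {a i..b i})"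
      unfolding cov_def by blast
    define a' where "a' = a(n := m)"
    define b' where "b' = b(n := m + \<delta>)"
    have "(\<forall>i<Suc n. a' i \<le> b' i \<and> b' i - a' i \<le> \<delta>)"
      using ab(1) assms by (auto simp: a'_def b'_def less_Suc_eq)
    moreover have "E \<subseteq> (\<Union>i<Suc n. {a' i..b' i})"
    proof
      fix x assume x: "x \<in> E"
      have "m \<le> x" unfolding m_def using x Suc.prems(1) by (simp add: cInf_lower)
      show "x \<in> (\<Union>i<Suc n. {a' i..b' i})"
      proof (cases "x \<le> m + \<delta>")
        case True
        then show ?thesis using \<open>m \<le> x\<close> by (auto simp: a'_def b'_def intro!: bexI[of _ n])
      next
        case False
        then have "x \<in> E'" using x by (auto simp: E'_def)
        then obtain i where "i < n" "x \<in> {a i..b i}" using ab(2) by blast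
        then show ?thesis by (auto simp: a'_def b'_def intro!: bexI[of _ i])
      qed
    qed
    ultimately have "cov \<delta> E (Suc n)" unfolding cov_def by blast
    then show False using Suc.prems by simp
  qed
  obtain p where p: "\<forall>i<Suc n. p i \<in> E'" "\<forall>i j. i < j \<longrightarrow> j < Suc n \<longrightarrow> p j - p i > \<delta>"
    using Suc.IH[OF E'bdd ncov] by blast
  have p0: "p 0 \<in> E" "p 0 > m + \<delta>" using p(1) by (auto simp: E'_def)
  have "Inf E < p 0 - \<delta>" using p0 m_def by simp
  then obtain e where e: "e \<in> E" "e < p 0 - \<delta>" using ne by (meson cInf_lessD)
  define p' where "p' = (\<lambda>i. if i = 0 then e else p (i - 1))"
  have "\<forall>i<Suc (Suc n). p' i \<in> E"
    using e p(1) by (auto simp: p'_def E'_def)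
  moreover have "\<forall>i j. i < j \<longrightarrow> j < Suc (Suc n) \<longrightarrow> p' j - p' i > \<delta>"
  proof (intro allI impI)
    fix i j :: nat assume ij: "i < j" "j < Suc (Suc n)"
    show "p' j - p' i > \<delta>"
    proof (cases "i = 0")
      case True
      have "p (j - 1) \<ge> p 0"
      proof (cases "j - 1 = 0")
        case False
        then have "p (j - 1) - p 0 > \<delta>" using p(2) ij by auto
        then show ?thesis using assms by simp
      qed simp
      then show ?thesis using True ij e by (simp add: p'_def)
    next
      case False
      then show ?thesis using p(2) ij by (simp add: p'_def)
    qed
  qed
  ultimately show ?case by blast
qed

lemma cover_points':
  assumes "\<delta> > 0" "E \<subseteq> {0..<1}" "cover_number \<delta> E \<ge> L" "L \<ge> 1"
  shows "\<exists>p. (\<forall>i<L. p i \<in> E) \<and> (\<forall>i j. i < j \<longrightarrow> j < L \<longrightarrow> p j - p i > \<delta>)"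
proof -
  have "\<not> cov \<delta> E (L - 1)"
  proof
    assume "cov \<delta> E (L - 1)"
    then have "cover_number \<delta> E \<le> L - 1" by (rule cov_le)
    then show False using assms by simp
  qed
  moreover have "bdd_below E" using assms(2) by (meson atLeastLessThan_iff bdd_below.I subset_iff)
  ultimately obtain p where "(\<forall>i<Suc (L - 1). p i \<in> E)" "(\<forall>i j. i < j \<longrightarrow> j < Suc (L - 1) \<longrightarrow> p j - p i > \<delta>)"
    using cover_points[OF assms(1)] by blast
  moreover have "Suc (L - 1) = L" using assms(4) by simp
  ultimately show ?thesis by metis
qed

lemma short_interval:
  fixes lo hi e \<epsilon> :: real
  assumes "lo < hi" "\<epsilon> > 0" "\<forall>z. lo \<le> z \<and> z < hi \<longrightarrow> \<bar>e - z\<bar> \<le> \<epsilon> / 2"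
  shows "hi - lo \<le> \<epsilon>"
proof (rule ccontr)
  assume "\<not> hi - lo \<le> \<epsilon>"
  then have h: "hi - lo > \<epsilon>" by simp
  define z where "z = (lo + \<epsilon> + hi) / 2"
  have "lo \<le> z" "z < hi" using h assms(1,2) by (auto simp: z_def)
  then have "\<bar>e - z\<bar> \<le> \<epsilon> / 2" using assms(3) by blast
  moreover have "\<bar>e - lo\<bar> \<le> \<epsilon> / 2" using assms(1,3) by auto
  moreover have "z - lo > \<epsilon>" using h by (simp add: z_def field_simps)
  ultimately show False by linarith
qed



fun gr :: "(nat \<Rightarrow> bool list \<Rightarrow> real) \<Rightarrow> nat \<Rightarrow> nat \<Rightarrow> bool list \<times> real \<times> real" where
  "gr qf y 0 = ([], 0, 1)"
| "gr qf y (Suc k) = (case gr qf y k of (R, A, B) \<Rightarrow>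
     (let q = qf y R in
       if A < q \<and> q < B then (if B - q \<ge> q - A then (R @ [True], q, B) else (R @ [False], A, q))
       else if q \<le> A then (R @ [True], A, B) else (R @ [False], A, B)))"

definition gR where "gR qf y k = fst (gr qf y k)"
definition gA where "gA qf y k = fst (snd (gr qf y k))"
definition gB where "gB qf y k = snd (snd (gr qf y k))"
definition gq where "gq qf y k = qf y (gR qf y k)"
definition useful where "useful qf y k \<longleftrightarrow> gA qf y k < gq qf y k \<and> gq qf y k < gB qf y k"

lemma gr_0: "gR qf y 0 = []" "gA qf y 0 = 0" "gB qf y 0 = 1"
  by (simp_all add: gR_def gA_def gB_def)

lemma gr_Suc:
  "gR qf y (Suc k) = gR qf y k @ [if useful qf y k then gB qf y k - gq qf y k \<ge> gq qf y k - gA qf y k else gq qf y k \<le> gA qf y k]"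
  "gA qf y (Suc k) = (if useful qf y k \<and> gB qf y k - gq qf y k \<ge> gq qf y k - gA qf y k then gq qf y k else gA qf y k)"
  "gB qf y (Suc k) = (if useful qf y k \<and> \<not> gB qf y k - gq qf y k \<ge> gq qf y k - gA qf y k then gq qf y k else gB qf y k)"
  by (auto simp: gR_def gA_def gB_def gq_def useful_def split: prod.splits simp: Let_def)

lemma gr_inv: "0 \<le> gA qf y k \<and> gA qf y k < gB qf y k \<and> gB qf y k \<le> 1"
  by (induction k) (auto simp: gr_0 gr_Suc useful_def)

lemma gA_mono: "k \<le> k' \<Longrightarrow> gA qf y k \<le> gA qf y k'"
proof (induction k' rule: dec_induct)
  case (step n)
  then show ?case using gr_inv[of qf y n] by (auto simp: gr_Suc useful_def)
qed simp

lemma gB_mono: "k \<le> k' \<Longrightarrow> gB qf y k' \<le> gB qf y k"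
proof (induction k' rule: dec_induct)
  case (step n)
  then show ?case using gr_inv[of qf y n] by (auto simp: gr_Suc useful_def)
qed simp

lemma gr_resps: "gA qf y k \<le> x \<Longrightarrow> x < gB qf y k \<Longrightarrow> resps qf x y k = gR qf y k"
proof (induction k)
  case 0 then show ?case by (simp add: gr_0)
next
  case (Suc k)
  have h: "gA qf y k \<le> x" "x < gB qf y k"
    using Suc.prems gA_mono[of k "Suc k" qf y] gB_mono[of k "Suc k" qf y] by auto
  then have e: "resps qf x y k = gR qf y k" using Suc.IH by blast
  show ?case
    using Suc.prems h by (auto simp: e gr_Suc Let_def gq_def[symmetric] useful_def split: if_splits)
qed

lemma gr_len_step: "gB qf y (Suc k) - gA qf y (Suc k) \<ge> (gB qf y k - gA qf y k) / 2"
  using gr_inv[of qf y k] by (auto simp: gr_Suc useful_def)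

lemma gr_len_nu: "\<not> useful qf y k \<Longrightarrow> gB qf y (Suc k) - gA qf y (Suc k) = gB qf y k - gA qf y k"
  by (auto simp: gr_Suc)

lemma gr_len_count:
  "k \<le> n \<Longrightarrow> gB qf y k - gA qf y k \<le> 2 ^ card {j. k \<le> j \<and> j < n \<and> useful qf y j} * (gB qf y n - gA qf y n)"
proof (induction n rule: dec_induct)
  case base
  have "{j. k \<le> j \<and> j < k \<and> useful qf y j} = {}" by auto
  then have "card {j. k \<le> j \<and> j < k \<and> useful qf y j} = 0" by (simp only: card.empty)
  then show ?case by (simp only: power_0 mult_1 order_refl)
next
  case (step n)
  let ?S = "\<lambda>n. {j. k \<le> j \<and> j < n \<and> useful qf y j}"
  show ?case
  proof (cases "useful qf y n")
    case True
    then have "?S (Suc n) = insert n (?S n)" using step by auto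
    moreover have "n \<notin> ?S n" by simp
    ultimately have c: "card (?S (Suc n)) = Suc (card (?S n))" by simp
    have "gB qf y k - gA qf y k \<le> 2 ^ card (?S n) * (gB qf y n - gA qf y n)" using step by simp
    also have "\<dots> \<le> 2 ^ card (?S n) * (2 * (gB qf y (Suc n) - gA qf y (Suc n)))"
      using gr_len_step[of qf y n] by (intro mult_left_mono) auto
    finally show ?thesis using c by (simp add: algebra_simps)
  next
    case False
    then have "?S (Suc n) = ?S n" using step by (auto simp: less_Suc_eq)
    then show ?thesis using step gr_len_nu[OF False] by simp
  qed
qed

lemma gA_cases: "gA qf y k = 0 \<or> (\<exists>j<k. gA qf y k = gq qf y j)"
proof (induction k)
  case 0 then show ?case by (simp add: gr_0)
next
  case (Suc k)
  then show ?case by (auto simp: gr_Suc less_Suc_eq)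
qed

lemma gB_cases: "gB qf y k = 1 \<or> (\<exists>j<k. gB qf y k = gq qf y j)"
proof (induction k)
  case 0 then show ?case by (simp add: gr_0)
next
  case (Suc k)
  then show ?case by (auto simp: gr_Suc less_Suc_eq)
qed

lemma gr_queries:
  assumes "x = gA qf y N"
  shows "queries qf N x y = map (gq qf y) [0..<N]"
proof -
  have "\<And>k. k < N \<Longrightarrow> resps qf x y k = gR qf y k"
  proof -
    fix k assume k: "k < N"
    have "gA qf y k \<le> x" using assms gA_mono k by simp
    moreover have "x < gB qf y k" using assms gr_inv[of qf y N] gB_mono[of k N qf y] k by simp
    ultimately show "resps qf x y k = gR qf y k" by (rule gr_resps)
  qed
  then show ?thesis by (simp add: queries_def gq_def)
qed



lemma cell:
  fixes Qs :: "real set" and p :: real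
  assumes fin: "finite Qs" and p: "0 \<le> p" "p < 1"
  defines "lo \<equiv> Max ({0} \<union> {s\<in>Qs. s \<le> p})" and "hi \<equiv> Min ({1} \<union> {s\<in>Qs. p < s})"
  shows "lo \<le> p" "p < hi" "0 \<le> lo" "hi \<le> 1" "lo = 0 \<or> lo \<in> Qs" "hi = 1 \<or> hi \<in> Qs"
        "\<forall>s\<in>Qs. s \<le> lo \<or> hi \<le> s"
        "\<forall>z s. lo \<le> z \<longrightarrow> z < hi \<longrightarrow> s \<in> Qs \<longrightarrow> (s \<le> p) = (s \<le> z)"
proof -
  have f1: "finite ({0} \<union> {s\<in>Qs. s \<le> p})" using fin by simp
  have f2: "finite ({1} \<union> {s\<in>Qs. p < s})" using fin by simp
  show l1: "lo \<le> p" unfolding lo_def using f1 p by (subst Max_le_iff) auto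
  show h1: "p < hi" unfolding hi_def using f2 p by (subst Min_gr_iff) auto
  show "0 \<le> lo" unfolding lo_def using f1 by (intro Max_ge) auto
  show "hi \<le> 1" unfolding hi_def using f2 by (intro Min_le) auto
  have "lo \<in> {0} \<union> {s\<in>Qs. s \<le> p}" unfolding lo_def using f1 by (intro Max_in) auto
  then show "lo = 0 \<or> lo \<in> Qs" by auto
  have "hi \<in> {1} \<union> {s\<in>Qs. p < s}" unfolding hi_def using f2 by (intro Min_in) auto
  then show "hi = 1 \<or> hi \<in> Qs" by auto
  have a: "s \<le> lo" if "s \<in> Qs" "s \<le> p" for s
    unfolding lo_def using f1 that by (intro Max_ge) auto
  have b: "hi \<le> s" if "s \<in> Qs" "p < s" for s
    unfolding hi_def using f2 that by (intro Min_le) auto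
  show "\<forall>s\<in>Qs. s \<le> lo \<or> hi \<le> s" using a b by force
  show "\<forall>z s. lo \<le> z \<longrightarrow> z < hi \<longrightarrow> s \<in> Qs \<longrightarrow> (s \<le> p) = (s \<le> z)"
  proof (intro allI impI)
    fix z s assume z: "lo \<le> z" "z < hi" and s: "s \<in> Qs"
    show "(s \<le> p) = (s \<le> z)"
    proof (cases "s \<le> p")
      case True then show ?thesis using a[OF s] z by auto
    next
      case False then show ?thesis using b[OF s] z by auto
    qed
  qed
qed

lemma chain_mono:
  fixes f :: "nat \<Rightarrow> real"
  assumes "\<forall>m. Suc m < n \<longrightarrow> f m < f (Suc m)"
  shows "m < m' \<Longrightarrow> m' < n \<Longrightarrow> f m < f m'"
proof (induction m' rule: less_induct)
  case (less m')
  show ?case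
  proof (cases "m' = Suc m")
    case True then show ?thesis using assms less.prems by auto
  next
    case False
    then obtain k where k: "m' = Suc k" "m < k" using less.prems by (cases m') auto
    then have "f m < f k" using less.IH[of k] less.prems by auto
    also have "f k < f m'" using assms k less.prems by auto
    finally show ?thesis .
  qed
qed

lemma chain_mono_le:
  fixes f :: "nat \<Rightarrow> real"
  assumes "\<forall>m. Suc m < n \<longrightarrow> f m < f (Suc m)"
  shows "m \<le> m' \<Longrightarrow> m' < n \<Longrightarrow> f m \<le> f m'"
  using chain_mono[OF assms, of m m'] by (cases "m = m'") auto

lemma chain_inj:
  fixes f :: "nat \<Rightarrow> real"
  assumes "\<forall>m. Suc m < n \<longrightarrow> f m < f (Suc m)"
  shows "inj_on f {..<n}"
proof (rule inj_onI)
  fix i j assume "i \<in> {..<n}" "j \<in> {..<n}" "f i = f j"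
  then show "i = j" using chain_mono[OF assms, of i j] chain_mono[OF assms, of j i]
    by (metis lessThan_iff less_irrefl nat_neq_iff)
qed

lemma cell_short:
  assumes acc: "\<forall>x\<in>{0..<1}. \<forall>y\<in>{1..Yc}. \<bar>estimate qf est N x y - x\<bar> \<le> \<epsilon> / 2"
    and eps: "\<epsilon> > 0" and y: "y \<in> {1..Yc}" and lohi: "lo < hi" "0 \<le> lo" "hi \<le> 1"
    and same: "\<forall>z. lo \<le> z \<and> z < hi \<longrightarrow> estimate qf est N z y = estimate qf est N xr y"
  shows "hi - lo \<le> \<epsilon>"
proof (rule short_interval[OF lohi(1) eps])
  show "\<forall>z. lo \<le> z \<and> z < hi \<longrightarrow> \<bar>estimate qf est N xr y - z\<bar> \<le> \<epsilon> / 2"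
  proof (intro allI impI)
    fix z assume z: "lo \<le> z \<and> z < hi"
    then have "z \<in> {0..<1}" using lohi by auto
    then have "\<bar>estimate qf est N z y - z\<bar> \<le> \<epsilon> / 2" using acc y by blast
    then show "\<bar>estimate qf est N xr y - z\<bar> \<le> \<epsilon> / 2" using same z by simp
  qed
qed



lemma lower_main:
  fixes \<epsilon> \<delta> :: real
  assumes strat: "is_strategy N Yc qf est" and priv: "is_private \<epsilon> \<delta> L N Yc qf est"
    and eps: "\<epsilon> > 0" and L: "L \<ge> 2" and dlt: "\<delta> = 1 / real L" and small: "2 * \<epsilon> < \<delta>"
  shows "real N + 4 - 2 * real L > log 2 (\<delta> / \<epsilon>) \<and> 2 ^ N * \<epsilon> \<ge> 1"
proof -
  let ?y = "1::nat"
  define A where "A = gA qf ?y"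
  define B where "B = gB qf ?y"
  define Q where "Q = gq qf ?y"
  define U where "U = useful qf ?y"
  have Yc: "Yc \<ge> 1" using strat by (simp add: is_strategy_def)
  then have y1: "?y \<in> {1..Yc}" by simp
  have acc: "\<forall>x\<in>{0..<1}. \<forall>y\<in>{1..Yc}. \<bar>estimate qf est N x y - x\<bar> \<le> \<epsilon> / 2"
    using priv by (simp add: is_private_def)
  have dpos: "\<delta> > 0" using eps small by simp
  have dle: "\<delta> < 1" using L dlt by (simp add: divide_less_eq)
  have inv: "\<And>k. 0 \<le> A k \<and> A k < B k \<and> B k \<le> 1" unfolding A_def B_def by (rule gr_inv)
  define x0 where "x0 = A N"
  have x0: "x0 \<in> {0..<1}" using inv[of N] by (simp add: x0_def)
  define q where "q = queries qf N x0 ?y"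
  have qmap: "q = map Q [0..<N]" unfolding q_def Q_def x0_def A_def by (rule gr_queries) simp
  have dist: "distinct q" using strat x0 y1 by (simp add: is_strategy_def q_def)
  have injQ: "inj_on Q {..<N}" using dist qmap by (simp add: distinct_map atLeast_upt)
  have setq: "set q = Q ` {..<N}" using qmap by (simp add: atLeast_upt)
  have cardq: "card (set q) = N" using dist by (simp add: distinct_card q_def)
  have lenN: "B N - A N \<le> \<epsilon>"
  proof (rule cell_short[OF acc eps y1, where xr = x0])
    show "A N < B N" "0 \<le> A N" "B N \<le> 1" using inv[of N] by auto
    show "\<forall>z. A N \<le> z \<and> z < B N \<longrightarrow> estimate qf est N z ?y = estimate qf est N x0 ?y"
    proof (intro allI impI)
      fix z assume "A N \<le> z \<and> z < B N"
      then have "resps qf z ?y N = gR qf ?y N" unfolding A_def B_def using gr_resps by blast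
      moreover have "resps qf x0 ?y N = gR qf ?y N" unfolding x0_def A_def
        using gr_resps inv[of N] A_def B_def by simp
      ultimately show "estimate qf est N z ?y = estimate qf est N x0 ?y" by (simp add: estimate_def)
    qed
  qed
  have cnt: "\<And>k. k \<le> N \<Longrightarrow> B k - A k \<le> 2 ^ card {j. k \<le> j \<and> j < N \<and> U j} * (B N - A N)"
    unfolding A_def B_def U_def by (rule gr_len_count)
  have second: "2 ^ N * \<epsilon> \<ge> 1"
  proof -
    have "card {j. 0 \<le> j \<and> j < N \<and> U j} \<le> N"
      by (rule order_trans[OF card_mono[of "{..<N}"]]) auto
    then have "(2::real) ^ card {j. 0 \<le> j \<and> j < N \<and> U j} \<le> 2 ^ N" by (intro power_increasing) auto
    moreover have "1 \<le> 2 ^ card {j. 0 \<le> j \<and> j < N \<and> U j} * (B N - A N)"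
      using cnt[of 0] by (simp add: A_def B_def gr_0)
    ultimately show ?thesis using lenN inv[of N]
      by (smt (verit, ccfv_SIG) mult_left_mono mult_right_mono zero_le_power)
  qed

  define ks where "ks = (LEAST k. B k - A k \<le> \<delta>)"
  have exN: "B N - A N \<le> \<delta>" using lenN small eps by simp
  have ksN: "ks \<le> N" unfolding ks_def using exN by (rule Least_le)
  have ksP: "B ks - A ks \<le> \<delta>" unfolding ks_def using exN by (rule LeastI)
  have ks0: "ks \<noteq> 0"
  proof
    assume "ks = 0"
    then show False using ksP dle by (simp add: A_def B_def gr_0)
  qed
  have prev: "B (ks - 1) - A (ks - 1) > \<delta>"
  proof -
    have "ks - 1 < ks" using ks0 by simp
    then have "\<not> B (ks - 1) - A (ks - 1) \<le> \<delta>" unfolding ks_def by (rule not_less_Least)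
    then show ?thesis by simp
  qed
  define a where "a = A ks"
  define b where "b = B ks"
  have ab_len: "b - a > \<delta> / 2" "b - a \<le> \<delta>"
  proof -
    have "B (Suc (ks - 1)) - A (Suc (ks - 1)) \<ge> (B (ks - 1) - A (ks - 1)) / 2"
      unfolding A_def B_def by (rule gr_len_step)
    then show "b - a > \<delta> / 2" using prev ks0 by (simp add: a_def b_def)
    show "b - a \<le> \<delta>" using ksP by (simp add: a_def b_def)
  qed
  define u where "u = card {j. ks \<le> j \<and> j < N \<and> U j}"
  have ulen: "b - a \<le> 2 ^ u * \<epsilon>"
  proof -
    have "b - a \<le> 2 ^ u * (B N - A N)" using cnt[OF ksN] by (simp add: a_def b_def u_def)
    also have "\<dots> \<le> 2 ^ u * \<epsilon>" using lenN by (intro mult_left_mono) auto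
    finally show ?thesis .
  qed
  have a_cases: "a = 0 \<or> a \<in> set q"
    using gA_cases[of qf ?y ks] ksN by (auto simp: a_def A_def setq Q_def)
  have b_cases: "b = 1 \<or> b \<in> set q"
    using gB_cases[of qf ?y ks] ksN by (auto simp: b_def B_def setq Q_def)
  have Qin: "card (set q \<inter> {a<..<b}) \<ge> u"
  proof -
    have "Q ` {j. ks \<le> j \<and> j < N \<and> U j} \<subseteq> set q \<inter> {a<..<b}"
    proof
      fix v assume "v \<in> Q ` {j. ks \<le> j \<and> j < N \<and> U j}"
      then obtain j where j: "ks \<le> j" "j < N" "U j" "v = Q j" by blast
      have "A j < Q j" "Q j < B j" using j(3) by (auto simp: U_def useful_def A_def B_def Q_def)
      moreover have "a \<le> A j" unfolding a_def A_def using j(1) by (rule gA_mono)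
      moreover have "B j \<le> b" unfolding b_def B_def using j(1) by (rule gB_mono)
      ultimately show "v \<in> set q \<inter> {a<..<b}" using j setq by auto
    qed
    moreover have "card (Q ` {j. ks \<le> j \<and> j < N \<and> U j}) = u"
      unfolding u_def by (rule card_image) (rule inj_on_subset[OF injQ], auto)
    ultimately show ?thesis by (metis card_mono finite_Int finite_set)
  qed
  have qQ: "q \<in> Qset N Yc qf x0" using y1 by (auto simp: Qset_def q_def)
  have cn: "cover_number \<delta> (info_set N Yc qf q) \<ge> L" using priv x0 qQ by (simp add: is_private_def)
  have Esub: "info_set N Yc qf q \<subseteq> {0..<1}" by (auto simp: info_set_def)
  obtain p where pE: "\<forall>i<L. p i \<in> info_set N Yc qf q"
      and pgap: "\<forall>i j. i < j \<longrightarrow> j < L \<longrightarrow> p j - p i > \<delta>"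
    using cover_points'[OF dpos Esub cn] L by auto
  have p01: "\<And>i. i < L \<Longrightarrow> 0 \<le> p i \<and> p i < 1" using pE by (auto simp: info_set_def)
  define lo where "lo = (\<lambda>i. Max ({0} \<union> {s\<in>set q. s \<le> p i}))"
  define hi where "hi = (\<lambda>i. Min ({1} \<union> {s\<in>set q. p i < s}))"
  have C: "\<And>i. i < L \<Longrightarrow> lo i \<le> p i \<and> p i < hi i \<and> 0 \<le> lo i \<and> hi i \<le> 1 \<and> (lo i = 0 \<or> lo i \<in> set q)
      \<and> (hi i = 1 \<or> hi i \<in> set q) \<and> (\<forall>s\<in>set q. s \<le> lo i \<or> hi i \<le> s)
      \<and> (\<forall>z s. lo i \<le> z \<longrightarrow> z < hi i \<longrightarrow> s \<in> set q \<longrightarrow> (s \<le> p i) = (s \<le> z))"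
  proof -
    fix i assume i: "i < L"
    have h: "0 \<le> p i" "p i < 1" using p01[OF i] by auto
    note c = cell[OF finite_set h(1) h(2), of q]
    show "?thesis i" unfolding lo_def hi_def using c by blast
  qed
  have Cshort: "\<And>i. i < L \<Longrightarrow> hi i - lo i \<le> \<epsilon>"
  proof -
    fix i assume i: "i < L"
    obtain yi where yi: "yi \<in> {1..Yc}" "q = queries qf N (p i) yi"
      using pE i by (auto simp: info_set_def Qset_def)
    show "hi i - lo i \<le> \<epsilon>"
    proof (rule cell_short[OF acc eps yi(1), where xr = "p i"])
      show "lo i < hi i" "0 \<le> lo i" "hi i \<le> 1" using C[OF i] by auto
      show "\<forall>z. lo i \<le> z \<and> z < hi i \<longrightarrow> estimate qf est N z yi = estimate qf est N (p i) yi"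
      proof (intro allI impI)
        fix z assume "lo i \<le> z \<and> z < hi i"
        then have "\<forall>s\<in>set (queries qf N (p i) yi). (p i \<ge> s) = (z \<ge> s)" using C[OF i] yi(2) by auto
        then show "estimate qf est N z yi = estimate qf est N (p i) yi" by (rule same_side_estimate)
      qed
    qed
  qed

  define z where "z = (\<lambda>m. if even m then lo (m div 2) else hi (m div 2))"
  have zstep: "\<forall>m. Suc m < 2 * L \<longrightarrow> z m < z (Suc m)"
  proof (intro allI impI)
    fix m assume m: "Suc m < 2 * L"
    show "z m < z (Suc m)"
    proof (cases "even m")
      case True
      then obtain i where i: "m = 2 * i" by blast
      then have "i < L" using m by simp
      then show ?thesis using C[of i] i by (simp add: z_def)
    next
      case False
      then obtain i where i: "m = 2 * i + 1" by (metis oddE)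
      then have il: "Suc i < L" using m by simp
      have "hi i \<le> lo i + \<epsilon>" using Cshort[of i] il by simp
      also have "\<dots> \<le> p i + \<epsilon>" using C[of i] il by simp
      also have "\<dots> < p (Suc i) - \<epsilon>" using pgap il small by force
      also have "\<dots> < lo (Suc i)" using Cshort[OF il] C[OF il] by simp
      finally have "hi i < lo (Suc i)" .
      moreover have "Suc m = 2 * Suc i" using i by simp
      ultimately show ?thesis using i by (simp add: z_def)
    qed
  qed
  have zinj: "inj_on z {..<2 * L}" by (rule chain_inj[OF zstep])
  have zmono: "\<And>m m'. m < m' \<Longrightarrow> m' < 2 * L \<Longrightarrow> z m < z m'" by (rule chain_mono[OF zstep])
  have zmono_le: "\<And>m m'. m \<le> m' \<Longrightarrow> m' < 2 * L \<Longrightarrow> z m \<le> z m'" by (rule chain_mono_le[OF zstep])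
  have zq: "\<And>m. m < 2 * L \<Longrightarrow> z m = 0 \<or> z m = 1 \<or> z m \<in> set q"
  proof -
    fix m assume m: "m < 2 * L"
    then have i: "m div 2 < L" by simp
    show "z m = 0 \<or> z m = 1 \<or> z m \<in> set q" using C[OF i] by (auto simp: z_def)
  qed
  have R1: "\<And>i. i < L \<Longrightarrow> p i < a \<Longrightarrow> lo i \<le> a \<and> hi i \<le> a"
  proof -
    fix i assume i: "i < L" and pa: "p i < a"
    then have "a \<in> set q" using a_cases p01[OF i] by auto
    moreover have Ci: "lo i \<le> p i" "p i < hi i" "\<forall>s\<in>set q. s \<le> lo i \<or> hi i \<le> s" using C[OF i] by blast+
    ultimately have "a \<le> lo i \<or> hi i \<le> a" by blast
    then show "lo i \<le> a \<and> hi i \<le> a" using Ci pa by linarith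
  qed
  have R2: "\<And>i. i < L \<Longrightarrow> b \<le> p i \<Longrightarrow> b \<le> lo i \<and> b \<le> hi i"
  proof -
    fix i assume i: "i < L" and pb: "b \<le> p i"
    then have "b \<in> set q" using b_cases p01[OF i] by auto
    moreover have Ci: "lo i \<le> p i" "p i < hi i" "\<forall>s\<in>set q. s \<le> lo i \<or> hi i \<le> s" using C[OF i] by blast+
    ultimately have "b \<le> lo i \<or> hi i \<le> b" by blast
    then show "b \<le> lo i \<and> b \<le> hi i" using Ci pb by linarith
  qed
  have R3: "\<And>i. i < L \<Longrightarrow> a \<le> p i \<Longrightarrow> p i < b \<Longrightarrow> a \<le> lo i \<and> hi i \<le> b"
  proof -
    fix i assume i: "i < L" and pa: "a \<le> p i" and pb: "p i < b"
    have Ci: "lo i \<le> p i" "p i < hi i" "\<forall>s\<in>set q. s \<le> lo i \<or> hi i \<le> s" "0 \<le> lo i" "hi i \<le> 1"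
      using C[OF i] by blast+
    have "a \<le> lo i"
    proof (cases "a = 0")
      case False
      then have "a \<in> set q" using a_cases by simp
      then have "a \<le> lo i \<or> hi i \<le> a" using Ci(3) by blast
      then show ?thesis using Ci pa by linarith
    qed (use Ci in simp)
    moreover have "hi i \<le> b"
    proof (cases "b = 1")
      case False
      then have "b \<in> set q" using b_cases by simp
      then have "b \<le> lo i \<or> hi i \<le> b" using Ci(3) by blast
      then show ?thesis using Ci pb by linarith
    qed (use Ci in simp)
    ultimately show "a \<le> lo i \<and> hi i \<le> b" by simp
  qed
  have zout: "\<And>m. m < 2 * L \<Longrightarrow> \<not> (a \<le> p (m div 2) \<and> p (m div 2) < b) \<Longrightarrow> z m \<notin> {a<..<b}"
  proof -
    fix m assume m: "m < 2 * L" and np: "\<not> (a \<le> p (m div 2) \<and> p (m div 2) < b)"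
    have i: "m div 2 < L" using m by simp
    show "z m \<notin> {a<..<b}"
    proof (cases "p (m div 2) < a")
      case True then show ?thesis using R1[OF i] by (auto simp: z_def)
    next
      case False then show ?thesis using np R2[OF i] by (auto simp: z_def)
    qed
  qed
  have one_in: "\<And>i j. i < L \<Longrightarrow> j < L \<Longrightarrow> a \<le> p i \<Longrightarrow> p i < b \<Longrightarrow> a \<le> p j \<Longrightarrow> p j < b \<Longrightarrow> i = j"
  proof (rule ccontr)
    fix i j assume h: "i < L" "j < L" "a \<le> p i" "p i < b" "a \<le> p j" "p j < b" and ne: "i \<noteq> j"
    then consider "i < j" | "j < i" by linarith
    then show False
    proof cases
      case 1 then have "p j - p i > \<delta>" using pgap h by auto
      then show False using h ab_len by simp
    next
      case 2 then have "p i - p j > \<delta>" using pgap h by auto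
      then show False using h ab_len by simp
    qed
  qed

  define Qo where "Qo = set q - {a<..<b}"
  have part: "card (set q) = card (set q \<inter> {a<..<b}) + card Qo"
  proof -
    have "set q = (set q \<inter> {a<..<b}) \<union> Qo" by (auto simp: Qo_def)
    moreover have "(set q \<inter> {a<..<b}) \<inter> Qo = {}" by (auto simp: Qo_def)
    ultimately show ?thesis by (metis card_Un_disjoint finite_Int finite_set finite_Un)
  qed
  have Qo2: "card (Qo \<union> {0, 1}) \<le> card Qo + 2"
  proof -
    have "card (Qo \<union> {0, 1}) \<le> card Qo + card {0::real, 1}" by (rule card_Un_le)
    then show ?thesis by simp
  qed
  have aQ: "a \<in> Qo \<union> {0, 1}" using a_cases by (auto simp: Qo_def)
  have bQ: "b \<in> Qo \<union> {0, 1}" using b_cases by (auto simp: Qo_def)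
  have Qo_big: "card Qo + 3 \<ge> 2 * L"
  proof (cases "\<exists>j<L. a \<le> p j \<and> p j < b")
    case False
    have "z ` {..<2 * L} \<subseteq> Qo \<union> {0, 1}"
    proof
      fix v assume "v \<in> z ` {..<2 * L}"
      then obtain m where m: "m < 2 * L" "v = z m" by auto
      have "m div 2 < L" using m by simp
      then have "z m \<notin> {a<..<b}" using zout[OF m(1)] False by blast
      then show "v \<in> Qo \<union> {0, 1}" using zq[OF m(1)] m by (auto simp: Qo_def)
    qed
    then have "card (z ` {..<2 * L}) \<le> card (Qo \<union> {0, 1})" by (intro card_mono) (auto simp: Qo_def)
    moreover have "card (z ` {..<2 * L}) = 2 * L" using zinj by (simp add: card_image)
    ultimately show ?thesis using Qo2 by linarith
  next
    case True
    then obtain j where j: "j < L" "a \<le> p j" "p j < b" by blast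
    define M' where "M' = {..<2 * L} - {2 * j, 2 * j + 1}"
    have cM: "card M' = 2 * L - 2"
    proof -
      have "{2 * j, 2 * j + 1} \<subseteq> {..<2 * L}" using j by auto
      then have "card M' = card {..<2 * L} - card {2 * j, 2 * j + 1}"
        unfolding M'_def using card_Diff_subset[of "{2 * j, 2 * j + 1}" "{..<2 * L}"] by simp
      then show ?thesis by simp
    qed
    define Z0 where "Z0 = z ` M'"
    have cZ0: "card Z0 = 2 * L - 2"
      unfolding Z0_def using cM inj_on_subset[OF zinj, of M'] by (simp add: card_image M'_def)
    have Z0sub: "Z0 \<subseteq> Qo \<union> {0, 1}"
    proof
      fix v assume "v \<in> Z0"
      then obtain m where m: "m \<in> M'" "v = z m" by (auto simp: Z0_def)
      have ml: "m < 2 * L" "m div 2 \<noteq> j" using m(1) by (auto simp: M'_def)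
      have "m div 2 < L" using ml by simp
      then have "\<not> (a \<le> p (m div 2) \<and> p (m div 2) < b)" using one_in[of "m div 2" j] j ml by blast
      then have "z m \<notin> {a<..<b}" using zout[OF ml(1)] by blast
      then show "v \<in> Qo \<union> {0, 1}" using zq[OF ml(1)] m by (auto simp: Qo_def)
    qed
    have zj: "z (2 * j) = lo j" "z (2 * j + 1) = hi j" by (simp_all add: z_def)
    have Cj: "lo j \<le> p j" "p j < hi j" using C[OF j(1)] by auto
    have notboth: "\<not> (a \<in> Z0 \<and> b \<in> Z0)"
    proof
      assume both: "a \<in> Z0 \<and> b \<in> Z0"
      obtain m1 where m1: "m1 \<in> M'" "a = z m1" using both by (auto simp: Z0_def)
      obtain m2 where m2: "m2 \<in> M'" "b = z m2" using both by (auto simp: Z0_def)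
      have m1l: "m1 < 2 * L" "m1 \<noteq> 2 * j" "m1 \<noteq> 2 * j + 1" using m1 by (auto simp: M'_def)
      have m2l: "m2 < 2 * L" "m2 \<noteq> 2 * j" "m2 \<noteq> 2 * j + 1" using m2 by (auto simp: M'_def)
      have "m1 < 2 * j"
      proof (rule ccontr)
        assume "\<not> m1 < 2 * j"
        then have "2 * j + 1 < m1" using m1l by linarith
        then have "z (2 * j + 1) < z m1" using zmono m1l by blast
        then show False using zj Cj j m1 by simp
      qed
      then have j1: "j \<ge> 1" "m1 \<le> 2 * (j - 1) + 1" by auto
      then have "z m1 \<le> z (2 * (j - 1) + 1)" using zmono_le j by simp
      then have "a \<le> hi (j - 1)" using m1 by (simp add: z_def)
      moreover have "hi (j - 1) - lo (j - 1) \<le> \<epsilon>" "lo (j - 1) \<le> p (j - 1)"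
        using Cshort[of "j - 1"] C[of "j - 1"] j by auto
      ultimately have pa: "p (j - 1) \<ge> a - \<epsilon>" by linarith
      have "2 * j + 1 < m2"
      proof (rule ccontr)
        assume "\<not> 2 * j + 1 < m2"
        then have "m2 < 2 * j" using m2l by linarith
        then have "z m2 < z (2 * j)" using zmono j by simp
        then show False using zj Cj j m2 by simp
      qed
      then have j2: "j + 1 < L" "2 * (j + 1) \<le> m2" using m2l by auto
      then have "z (2 * (j + 1)) \<le> z m2" using zmono_le m2l by blast
      then have "lo (j + 1) \<le> b" using m2 by (simp add: z_def)
      moreover have "hi (j + 1) - lo (j + 1) \<le> \<epsilon>" "p (j + 1) < hi (j + 1)"
        using Cshort[of "j + 1"] C[of "j + 1"] j2 by auto
      ultimately have pb: "p (j + 1) < b + \<epsilon>" by linarith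
      have "p (j + 1) - p j > \<delta>" using pgap j2 by auto
      moreover have "p j - p (j - 1) > \<delta>" using pgap[rule_format, of "j - 1" j] j j1 by auto
      ultimately show False using pa pb ab_len small by linarith
    qed
    have finZ0: "finite Z0" by (simp add: Z0_def M'_def)
    have "card Z0 + 1 \<le> card (Z0 \<union> {a, b})"
    proof (cases "a \<in> Z0")
      case False
      then have "card (insert a Z0) = card Z0 + 1" using finZ0 by simp
      moreover have "card (insert a Z0) \<le> card (Z0 \<union> {a, b})" using finZ0 by (intro card_mono) auto
      ultimately show ?thesis by simp
    next
      case True
      then have "b \<notin> Z0" using notboth by blast
      then have "card (insert b Z0) = card Z0 + 1" using finZ0 by simp
      moreover have "card (insert b Z0) \<le> card (Z0 \<union> {a, b})" using finZ0 by (intro card_mono) auto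
      ultimately show ?thesis by simp
    qed
    moreover have "card (Z0 \<union> {a, b}) \<le> card (Qo \<union> {0, 1})"
      using Z0sub aQ bQ by (intro card_mono) (auto simp: Qo_def)
    ultimately show ?thesis using Qo2 cZ0 L by linarith
  qed
  have Nbig: "real N + 4 - 2 * real L \<ge> real u + 1"
  proof -
    have "N \<ge> u + card Qo" using part Qin cardq by linarith
    then have "N + 3 \<ge> u + 2 * L" using Qo_big by linarith
    then have "real N + 3 \<ge> real u + 2 * real L" by (metis of_nat_add of_nat_le_iff of_nat_mult of_nat_numeral)
    then show ?thesis by linarith
  qed
  have "\<delta> / \<epsilon> < 2 ^ (u + 1)"
  proof -
    have "\<delta> < 2 * (b - a)" using ab_len(1) by (simp add: field_simps)
    also have "\<dots> \<le> 2 * (2 ^ u * \<epsilon>)" using mult_left_mono[OF ulen, of 2] by simp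
    finally have "\<delta> < 2 ^ (u + 1) * \<epsilon>" by simp
    then show ?thesis using eps by (simp add: divide_less_eq)
  qed
  then have "log 2 (\<delta> / \<epsilon>) < log 2 (2 ^ (u + 1))"
    using dpos eps by (subst log_less_cancel_iff) auto
  also have "log 2 (2 ^ (u + 1)) = real (u + 1)" by (rule log_pow_cancel) auto
  finally have "log 2 (\<delta> / \<epsilon>) < real N + 4 - 2 * real L" using Nbig by simp
  then show ?thesis using second by simp
qed



definition pbits :: "bool list \<Rightarrow> nat" where
  "pbits bs = foldl (\<lambda>p b. 2 * p + (if b then 1 else 0)) 0 bs"

lemma pbits_snoc: "pbits (bs @ [b]) = 2 * pbits bs + (if b then 1 else 0)"
  by (simp add: pbits_def)

lemma pbits_less: "pbits bs < 2 ^ length bs"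
proof (induction bs rule: rev_induct)
  case Nil then show ?case by (simp add: pbits_def)
next
  case (snoc b bs)
  then show ?case by (simp add: pbits_snoc)
qed

lemma floor_double:
  fixes v :: real
  assumes "v \<ge> 0"
  shows "nat \<lfloor>2 * v\<rfloor> = 2 * nat \<lfloor>v\<rfloor> + (if 2 * v \<ge> 2 * real (nat \<lfloor>v\<rfloor>) + 1 then 1 else 0)"
proof -
  have f0: "\<lfloor>v\<rfloor> \<ge> 0" using assms by simp
  have rf: "real (nat \<lfloor>v\<rfloor>) = of_int \<lfloor>v\<rfloor>" using f0 by simp
  have a: "of_int \<lfloor>v\<rfloor> \<le> v" "v < of_int \<lfloor>v\<rfloor> + 1" by linarith+
  show ?thesis
  proof (cases "2 * v \<ge> 2 * real (nat \<lfloor>v\<rfloor>) + 1")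
    case True
    have h: "2 * real_of_int \<lfloor>v\<rfloor> + 1 \<le> 2 * v" using True rf by simp
    have "\<lfloor>2 * v\<rfloor> = 2 * \<lfloor>v\<rfloor> + 1"
      unfolding floor_eq_iff of_int_add of_int_mult of_int_1 of_int_numeral using a h by linarith
    then show ?thesis using True f0 by (simp add: nat_add_distrib nat_mult_distrib)
  next
    case False
    have h: "\<not> 2 * real_of_int \<lfloor>v\<rfloor> + 1 \<le> 2 * v" using False rf by simp
    have "\<lfloor>2 * v\<rfloor> = 2 * \<lfloor>v\<rfloor>"
      unfolding floor_eq_iff of_int_add of_int_mult of_int_1 of_int_numeral using a h by linarith
    then show ?thesis using False f0 by (simp add: nat_mult_distrib)
  qed
qed

lemma odd_dyadic_ne:
  fixes p p' :: nat
  assumes "t \<noteq> t'"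
  shows "(2 * real p + 1) / 2 ^ (t + 1) \<noteq> (2 * real p' + 1) / 2 ^ (t' + 1)"
proof
  assume e: "(2 * real p + 1) / 2 ^ (t + 1) = (2 * real p' + 1) / 2 ^ (t' + 1)"
  then have "(2 * real p + 1) * 2 ^ (t' + 1) = (2 * real p' + 1) * 2 ^ (t + 1)"
    by (simp add: frac_eq_eq del: power_Suc)
  then have "real ((2 * p + 1) * 2 ^ (t' + 1)) = real ((2 * p' + 1) * 2 ^ (t + 1))"
    by (simp only: of_nat_mult of_nat_add of_nat_power of_nat_numeral of_nat_1)
  then have n: "(2 * p + 1) * 2 ^ (t' + 1) = (2 * p' + 1) * 2 ^ (t + 1)" by (simp only: of_nat_eq_iff)
  have sym: False if "s < s'" "(2 * a + 1) * 2 ^ (s' + 1) = (2 * a' + 1) * (2::nat) ^ (s + 1)" for s s' a a' :: nat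
  proof -
    have "(2::nat) ^ (s' + 1) = 2 ^ (s + 1) * 2 ^ (s' - s)" using that(1)
      by (metis add_Suc le_add_diff_inverse less_imp_le_nat plus_1_eq_Suc power_add add.commute)
    then have e1: "(2 * a + 1) * 2 ^ (s' + 1) = 2 ^ (s + 1) * ((2 * a + 1) * (2::nat) ^ (s' - s))"
      by (metis mult.assoc mult.commute)
    then have "2 ^ (s + 1) * ((2 * a + 1) * 2 ^ (s' - s)) = 2 ^ (s + 1) * (2 * a' + (1::nat))"
      using that(2) by (metis mult.commute)
    then have "(2 * a + 1) * 2 ^ (s' - s) = 2 * a' + 1"
      by (metis mult_left_cancel power_not_zero zero_neq_numeral)
    moreover have "even ((2 * a + 1) * (2::nat) ^ (s' - s))" using that(1) by simp
    ultimately show False by simp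
  qed
  show False
  proof (cases "t < t'")
    case True then show False using sym[of t t' p p'] n by simp
  next
    case False then have "t' < t" using assms by simp
    then show False using sym[of t' t p' p] n by simp
  qed
qed

locale upc =
  fixes eps :: real and L M :: nat
  assumes eps: "eps > 0" and L2: "L \<ge> 2" and Leps: "real L * eps < 1"
    and gM: "(1 - eps) / real (L - 1) - eps \<le> 2 ^ M * eps"
begin

definition "K = 2 * L - 2"
definition "dd = (1 - eps) / real (L - 1)"
definition "gg = dd - eps"
definition "ph i = (if even i then real (i div 2) * dd + eps else real (i div 2 + 1) * dd)"
definition "cnt rs = length (filter id (take K rs))"
definition "gqu j p t = real j * dd + eps + gg * (2 * real p + 1) / 2 ^ (t + 1)"
definition "qfu y rs = (if length rs < K then ph (length rs) else
    (let k = cnt rs; t = length rs - K in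
     if odd k then gqu ((k - 1) div 2) (pbits (drop K rs)) t
     else gqu ((y - 1) div 2 ^ M) (((y - 1) mod 2 ^ M) div 2 ^ (M - t)) t))"
definition "estu y rs = (let k = cnt rs in
     if odd k then gqu ((k - 1) div 2) (pbits (drop K rs)) M else real (k div 2) * dd + eps / 2)"
definition "Yc = (L - 1) * 2 ^ M"
definition "NN = K + M"

lemma L1: "real (L - 1) = real L - 1" using L2 by simp

lemma dd_pos: "dd > eps"
proof -
  have "real (L - 1) * eps < 1 - eps" using Leps L1 by (simp add: algebra_simps)
  moreover have "real (L - 1) > 0" using L2 by simp
  ultimately show ?thesis by (simp add: dd_def field_simps)
qed

lemma gg_pos: "gg > 0" using dd_pos by (simp add: gg_def)

lemma dd_last: "real (L - 1) * dd = 1 - eps"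
  using L2 by (simp add: dd_def)

lemma dd_gt: "dd > 1 / real L"
proof -
  have "real L * (1 - eps) > real L - 1" using Leps by (simp add: algebra_simps)
  then have "(1 - eps) / (real L - 1) > 1 / real L" using L2 by (simp add: field_simps)
  then show ?thesis using L1 by (simp add: dd_def)
qed

lemma ph_step: "ph i < ph (Suc i)"
  using dd_pos eps by (cases "even i") (auto simp: ph_def algebra_simps elim!: evenE oddE)

lemma ph_mono: "i < j \<Longrightarrow> ph i < ph j"
  using lift_Suc_mono_less[of ph, OF ph_step] by blast

lemma ph_mono_le: "i \<le> j \<Longrightarrow> ph i \<le> ph j"
  using ph_mono[of i j] by (cases "i = j") auto

lemma ph_even: "ph (2 * j) = real j * dd + eps" by (simp add: ph_def)
lemma ph_odd: "ph (2 * j + 1) = real (j + 1) * dd" by (simp add: ph_def)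

lemma ph_nonneg: "ph i \<ge> 0"
  using dd_pos eps by (simp add: ph_def)

lemma ph_lt1: "i < K \<Longrightarrow> ph i < 1"
proof -
  assume i: "i < K"
  have "ph i \<le> ph (2 * (L - 2) + 1)" using i L2 by (intro ph_mono_le) (simp add: K_def)
  also have "\<dots> = real (L - 2 + 1) * dd" by (rule ph_odd)
  also have "\<dots> = real (L - 1) * dd" using L2 by (simp add: Suc_diff_Suc numeral_2_eq_2)
  also have "\<dots> < 1" using dd_last eps by simp
  finally show ?thesis .
qed

end



lemma length_filter_less: "k \<le> n \<Longrightarrow> length (filter (\<lambda>i. i < k) [0..<n]) = k"
proof -
  assume kn: "k \<le> n"
  have "[0..<n] = [0..<k] @ [k..<n]" using kn by (metis le_add_diff_inverse upt_add_eq_append zero_le)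
  moreover have "filter (\<lambda>i. i < k) [0..<k] = [0..<k]" by (rule filter_True) auto
  moreover have "filter (\<lambda>i. i < k) [k..<n] = []" by (rule filter_False) auto
  ultimately show ?thesis by simp
qed

context upc
begin

lemma cnt_le: "cnt rs \<le> K"
  unfolding cnt_def by (metis length_filter_le length_take min.bounded_iff order_trans nat_le_linear)

lemma kappa_ex: "\<exists>\<kappa>\<le>K. \<forall>i<K. (ph i \<le> x) = (i < \<kappa>)"
proof -
  define \<kappa> where "\<kappa> = (LEAST i. i = K \<or> x < ph i)"
  have P: "\<kappa> = K \<or> x < ph \<kappa>" unfolding \<kappa>_def by (rule LeastI[of _ K]) simp
  have kK: "\<kappa> \<le> K" unfolding \<kappa>_def by (rule Least_le) simp
  have "\<forall>i<K. (ph i \<le> x) = (i < \<kappa>)"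
  proof (intro allI impI)
    fix i assume i: "i < K"
    show "(ph i \<le> x) = (i < \<kappa>)"
    proof
      assume "ph i \<le> x"
      show "i < \<kappa>"
      proof (rule ccontr)
        assume "\<not> i < \<kappa>"
        then have "\<kappa> \<le> i" by simp
        then have "\<kappa> < K" "ph \<kappa> \<le> ph i" using i ph_mono_le by auto
        then show False using P \<open>ph i \<le> x\<close> by auto
      qed
    next
      assume "i < \<kappa>"
      then have "\<not> (i = K \<or> x < ph i)" unfolding \<kappa>_def by (rule not_less_Least)
      then show "ph i \<le> x" by simp
    qed
  qed
  then show ?thesis using kK by blast
qed

lemma resps_K: "k \<le> K \<Longrightarrow> resps qfu x y k = map (\<lambda>i. ph i \<le> x) [0..<k]"
proof (induction k)
  case 0 then show ?case by simp
next
  case (Suc k)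
  then have "k < K" by simp
  then show ?case using Suc by (simp add: Let_def qfu_def)
qed

lemma cnt_resps:
  assumes kK: "\<kappa> \<le> K" and ch: "\<forall>i<K. (ph i \<le> x) = (i < \<kappa>)" and n: "K \<le> n"
  shows "cnt (resps qfu x y n) = \<kappa>"
proof -
  have "take K (resps qfu x y n) = resps qfu x y K" using n by (rule resps_take)
  also have "\<dots> = map (\<lambda>i. ph i \<le> x) [0..<K]" by (rule resps_K) simp
  finally have "cnt (resps qfu x y n) = length (filter (\<lambda>i. ph i \<le> x) [0..<K])"
    by (simp add: cnt_def filter_map comp_def)
  also have "filter (\<lambda>i. ph i \<le> x) [0..<K] = filter (\<lambda>i. i < \<kappa>) [0..<K]"
    using ch by (intro filter_cong) auto
  finally show ?thesis using length_filter_less[OF kK] by simp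
qed

lemma qfu_at:
  assumes "K \<le> length rs" "cnt rs = \<kappa>"
  shows "qfu y rs = (if odd \<kappa> then gqu ((\<kappa> - 1) div 2) (pbits (drop K rs)) (length rs - K)
      else gqu ((y - 1) div 2 ^ M) (((y - 1) mod 2 ^ M) div 2 ^ (M - (length rs - K))) (length rs - K))"
  using assms by (simp add: qfu_def Let_def)

lemma gqu_le_iff: "(gqu j p t \<le> real j * dd + eps + gg * th) = (2 * real p + 1 \<le> 2 ^ (t + 1) * th)"
proof -
  have "(gqu j p t \<le> real j * dd + eps + gg * th) = (gg * ((2 * real p + 1) / 2 ^ (t + 1)) \<le> gg * th)"
    by (simp add: gqu_def)
  also have "\<dots> = ((2 * real p + 1) / 2 ^ (t + 1) \<le> th)" using gg_pos by (rule mult_le_cancel_left_pos)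
  also have "\<dots> = (2 * real p + 1 \<le> 2 ^ (t + 1) * th)" by (simp add: divide_le_eq mult.commute)
  finally show ?thesis .
qed

definition "thx x j = (x - (real j * dd + eps)) / gg"
definition "Pp x j t = nat \<lfloor>2 ^ t * thx x j\<rfloor>"

lemma x_th: "x = real j * dd + eps + gg * thx x j"
proof -
  have "gg * thx x j = x - (real j * dd + eps)" unfolding thx_def using gg_pos by simp
  then show ?thesis by simp
qed

lemma gap_resps:
  assumes kK: "2 * j + 1 \<le> K" and ch: "\<forall>i<K. (ph i \<le> x) = (i < 2 * j + 1)"
    and lo: "real j * dd + eps \<le> x" and hi: "x < real (j + 1) * dd"
  shows "resps qfu x y (K + t) = resps qfu x y K @ map (\<lambda>s. gqu j (Pp x j s) s \<le> x) [0..<t]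
      \<and> pbits (map (\<lambda>s. gqu j (Pp x j s) s \<le> x) [0..<t]) = Pp x j t"
proof (induction t)
  case 0
  have "x - (real j * dd + eps) < gg" using hi by (simp add: gg_def algebra_simps)
  then have "thx x j < 1" "thx x j \<ge> 0" using gg_pos lo by (simp_all add: thx_def divide_less_eq)
  then have "\<lfloor>thx x j\<rfloor> = 0" by (simp add: floor_eq_iff)
  then show ?case by (simp add: pbits_def Pp_def)
next
  case (Suc t)
  define R where "R = resps qfu x y (K + t)"
  have lenR: "length R = K + t" by (simp add: R_def)
  have cR: "cnt R = 2 * j + 1" unfolding R_def by (rule cnt_resps[OF kK ch]) simp
  have dR: "drop K R = map (\<lambda>s. gqu j (Pp x j s) s \<le> x) [0..<t]" using Suc.IH by (simp add: R_def)
  have q: "qfu y R = gqu j (Pp x j t) t"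
    using qfu_at[of R "2 * j + 1" y] lenR cR dR Suc.IH by simp
  have thpos: "thx x j \<ge> 0" using lo gg_pos by (simp add: thx_def)
  have b: "(gqu j (Pp x j t) t \<le> x) = (2 * real (Pp x j t) + 1 \<le> 2 * (2 ^ t * thx x j))"
    using gqu_le_iff[of j "Pp x j t" t "thx x j"] x_th[of x j] by (simp add: mult.assoc)
  have fd: "Pp x j (Suc t) = 2 * Pp x j t + (if 2 * (2 ^ t * thx x j) \<ge> 2 * real (Pp x j t) + 1 then 1 else 0)"
    unfolding Pp_def using floor_double[of "2 ^ t * thx x j"] thpos by (simp add: mult.assoc)
  have "resps qfu x y (K + Suc t) = R @ [qfu y R \<le> x]" by (simp add: R_def Let_def)
  then show ?case using Suc.IH q b fd by (simp add: R_def pbits_snoc)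
qed

end



context upc
begin

lemma K_even: "K = 2 * (L - 1)" using L2 by (simp add: K_def)

lemma classify:
  assumes x: "0 \<le> x" "x < 1" and kK: "\<kappa> \<le> K" and ch: "\<forall>i<K. (ph i \<le> x) = (i < \<kappa>)"
  shows "(odd \<kappa> \<longrightarrow> real ((\<kappa> - 1) div 2) * dd + eps \<le> x \<and> x < real ((\<kappa> - 1) div 2 + 1) * dd \<and> \<kappa> < K)
       \<and> (even \<kappa> \<longrightarrow> real (\<kappa> div 2) * dd \<le> x \<and> x < real (\<kappa> div 2) * dd + eps)"
proof (intro conjI impI)
  assume o: "odd \<kappa>"
  then obtain j where j: "\<kappa> = 2 * j + 1" by (metis oddE)
  have kl: "\<kappa> < K"
  proof (rule ccontr)
    assume "\<not> \<kappa> < K"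
    then have "\<kappa> = K" using kK by simp
    then show False using o K_even by simp
  qed
  have "ph (2 * j) \<le> x" using ch j kl by simp
  then show "real ((\<kappa> - 1) div 2) * dd + eps \<le> x" using j by (simp add: ph_even)
  have "\<not> ph (2 * j + 1) \<le> x" using ch j kl by simp
  then show "x < real ((\<kappa> - 1) div 2 + 1) * dd" using j ph_odd[of j] by simp
  show "\<kappa> < K" by (rule kl)
next
  assume e: "even \<kappa>"
  then obtain j where j: "\<kappa> = 2 * j" by blast
  show "real (\<kappa> div 2) * dd \<le> x"
  proof (cases j)
    case 0 then show ?thesis using j x by simp
  next
    case (Suc i)
    then have "ph (2 * i + 1) \<le> x" using ch j kK by simp
    then show ?thesis using j Suc ph_odd[of i] by simp
  qed
  show "x < real (\<kappa> div 2) * dd + eps"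
  proof (cases "\<kappa> < K")
    case True
    then have "\<not> ph (2 * j) \<le> x" using ch j by simp
    then show ?thesis using j by (simp add: ph_even)
  next
    case False
    then have "j = L - 1" using kK j K_even by simp
    then show ?thesis using j x dd_last by simp
  qed
qed

lemma queries_split:
  "queries qfu NN x y = map ph [0..<K] @ map (\<lambda>t. qfu y (resps qfu x y (K + t))) [0..<M]"
proof -
  have "[0..<K + M] = [0..<K] @ [K..<K + M]" by (rule upt_add_eq_append) simp
  moreover have "[K..<K + M] = map (\<lambda>t. t + K) [0..<M]" by (simp add: map_add_upt add.commute)
  moreover have "map (\<lambda>k. qfu y (resps qfu x y k)) [0..<K] = map ph [0..<K]"
    by (intro map_cong) (auto simp: qfu_def)
  ultimately show ?thesis by (simp add: queries_def NN_def add.commute)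
qed

lemma gap_step:
  assumes kK: "2 * j + 1 \<le> K" and ch: "\<forall>i<K. (ph i \<le> x) = (i < 2 * j + 1)"
    and lo: "real j * dd + eps \<le> x" and hi: "x < real (j + 1) * dd"
  shows "cnt (resps qfu x y (K + t)) = 2 * j + 1 \<and> pbits (drop K (resps qfu x y (K + t))) = Pp x j t"
proof
  show "cnt (resps qfu x y (K + t)) = 2 * j + 1" by (rule cnt_resps[OF kK ch]) simp
  show "pbits (drop K (resps qfu x y (K + t))) = Pp x j t"
    using gap_resps[OF kK ch lo hi, of y t] by simp
qed

lemma queries_gap:
  assumes kK: "2 * j + 1 \<le> K" and ch: "\<forall>i<K. (ph i \<le> x) = (i < 2 * j + 1)"
    and lo: "real j * dd + eps \<le> x" and hi: "x < real (j + 1) * dd"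
  shows "queries qfu NN x y = map ph [0..<K] @ map (\<lambda>t. gqu j (Pp x j t) t) [0..<M]"
proof -
  have "map (\<lambda>t. qfu y (resps qfu x y (K + t))) [0..<M] = map (\<lambda>t. gqu j (Pp x j t) t) [0..<M]"
  proof (rule map_cong[OF refl])
    fix t assume "t \<in> set [0..<M]"
    have s: "cnt (resps qfu x y (K + t)) = 2 * j + 1" "pbits (drop K (resps qfu x y (K + t))) = Pp x j t"
      using gap_step[OF kK ch lo hi] by blast+
    show "qfu y (resps qfu x y (K + t)) = gqu j (Pp x j t) t"
      using qfu_at[of "resps qfu x y (K + t)" "2 * j + 1" y] s by simp
  qed
  then show ?thesis by (simp add: queries_split)
qed

lemma queries_decoy:
  assumes kK: "\<kappa> \<le> K" and ch: "\<forall>i<K. (ph i \<le> x) = (i < \<kappa>)" and e: "even \<kappa>"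
  shows "queries qfu NN x y = map ph [0..<K] @
     map (\<lambda>t. gqu ((y - 1) div 2 ^ M) (((y - 1) mod 2 ^ M) div 2 ^ (M - t)) t) [0..<M]"
proof -
  have "map (\<lambda>t. qfu y (resps qfu x y (K + t))) [0..<M] =
     map (\<lambda>t. gqu ((y - 1) div 2 ^ M) (((y - 1) mod 2 ^ M) div 2 ^ (M - t)) t) [0..<M]"
  proof (rule map_cong[OF refl])
    fix t assume "t \<in> set [0..<M]"
    have s: "cnt (resps qfu x y (K + t)) = \<kappa>" by (rule cnt_resps[OF kK ch]) simp
    show "qfu y (resps qfu x y (K + t)) = gqu ((y - 1) div 2 ^ M) (((y - 1) mod 2 ^ M) div 2 ^ (M - t)) t"
      using qfu_at[of "resps qfu x y (K + t)" \<kappa> y] s e by simp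
  qed
  then show ?thesis by (simp add: queries_split)
qed

end



context upc
begin

lemma est_gap:
  assumes kK: "2 * j + 1 \<le> K" and ch: "\<forall>i<K. (ph i \<le> x) = (i < 2 * j + 1)"
    and lo: "real j * dd + eps \<le> x" and hi: "x < real (j + 1) * dd"
  shows "estimate qfu estu NN x y = gqu j (Pp x j M) M"
  using gap_step[OF kK ch lo hi, of y M] by (simp add: estimate_def estu_def NN_def)

lemma est_decoy:
  assumes kK: "\<kappa> \<le> K" and ch: "\<forall>i<K. (ph i \<le> x) = (i < \<kappa>)" and e: "even \<kappa>"
  shows "estimate qfu estu NN x y = real (\<kappa> div 2) * dd + eps / 2"
proof -
  have "cnt (resps qfu x y NN) = \<kappa>" by (rule cnt_resps[OF kK ch]) (simp add: NN_def)
  then show ?thesis using e by (simp add: estimate_def estu_def)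
qed

lemma acc_gap:
  assumes lo: "real j * dd + eps \<le> x" and hi: "x < real (j + 1) * dd"
  shows "\<bar>gqu j (Pp x j M) M - x\<bar> \<le> eps / 2"
proof -
  define v where "v = 2 ^ M * thx x j"
  have thpos: "thx x j \<ge> 0" using lo gg_pos by (simp add: thx_def)
  then have vpos: "v \<ge> 0" by (simp add: v_def)
  define P where "P = Pp x j M"
  have rP: "real P = of_int \<lfloor>v\<rfloor>" using vpos by (simp add: P_def Pp_def v_def)
  have v1: "real P \<le> v" "v < real P + 1" using rP by linarith+
  have e1: "gqu j P M - x = gg * (2 * real P + 1) / 2 ^ (M + 1) - gg * thx x j"
    using x_th[of x j] unfolding gqu_def by linarith
  have e2: "gg * (2 * real P + 1) / 2 ^ (M + 1) - gg * thx x j = gg * ((2 * real P + 1) / 2 ^ (M + 1) - thx x j)"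
    by (simp only: right_diff_distrib times_divide_eq_right)
  have e3: "2 * v / 2 ^ (M + 1) = thx x j" by (simp add: v_def)
  have e4: "(2 * real P + 1) / 2 ^ (M + 1) - thx x j = (2 * real P + 1 - 2 * v) / 2 ^ (M + 1)"
    by (simp only: diff_divide_distrib e3)
  have eq: "gqu j P M - x = gg * ((2 * real P + 1 - 2 * v) / 2 ^ (M + 1))" using e1 e2 e4 by simp
  have "\<bar>2 * real P + 1 - 2 * v\<bar> \<le> 1" using v1 by linarith
  then have "\<bar>(2 * real P + 1 - 2 * v) / 2 ^ (M + 1)\<bar> \<le> 1 / 2 ^ (M + 1)"
    by (simp add: abs_divide divide_right_mono)
  then have le: "gg * \<bar>(2 * real P + 1 - 2 * v) / 2 ^ (M + 1)\<bar> \<le> gg * (1 / 2 ^ (M + 1))"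
    using gg_pos by (intro mult_left_mono) auto
  have "\<bar>gqu j P M - x\<bar> = \<bar>gg\<bar> * \<bar>(2 * real P + 1 - 2 * v) / 2 ^ (M + 1)\<bar>"
    unfolding eq by (rule abs_mult)
  also have "\<bar>gg\<bar> = gg" using gg_pos by simp
  finally have "\<bar>gqu j P M - x\<bar> \<le> gg * (1 / 2 ^ (M + 1))" using le by simp
  also have "\<dots> = gg / 2 ^ M / 2" by simp
  also have "\<dots> \<le> eps / 2"
  proof -
    have "gg \<le> 2 ^ M * eps" using gM by (simp add: gg_def dd_def)
    then have "gg / 2 ^ M \<le> eps" by (simp add: divide_le_eq mult.commute)
    then show ?thesis by simp
  qed
  finally show ?thesis by (simp add: P_def)
qed

end



context upc
begin

lemma gqu_bounds:
  assumes "p < 2 ^ t"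
  shows "real j * dd + eps < gqu j p t \<and> gqu j p t < real (j + 1) * dd"
proof -
  define f where "f = (2 * real p + 1) / 2 ^ (t + 1)"
  have "real p + 1 \<le> 2 ^ t" using assms by (metis Suc_eq_plus1 Suc_leI of_nat_1 of_nat_add of_nat_le_iff of_nat_numeral of_nat_power)
  then have "2 * real p + 1 < 2 ^ (t + 1)" by simp
  then have f: "0 < f" "f < 1" by (simp_all add: f_def)
  have g: "gqu j p t = real j * dd + eps + gg * f" by (simp add: gqu_def f_def)
  have "gg * f > 0" "gg * f < gg" using f gg_pos by simp_all
  then show ?thesis using g by (simp add: gg_def algebra_simps)
qed

lemma gqu_01:
  assumes "j \<le> L - 2" "p < 2 ^ t"
  shows "gqu j p t \<in> {0..<1}"
proof -
  have "real j * dd + eps \<ge> 0" using dd_pos eps by simp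
  moreover have "dd \<ge> 0" using dd_pos eps by linarith
  then have "real (j + 1) * dd \<le> real (L - 1) * dd" using assms(1) L2 by (intro mult_right_mono) auto
  ultimately show ?thesis using gqu_bounds[OF assms(2), of j] dd_last eps by auto
qed

lemma gqu_inj: "gqu j p t = gqu j p' t' \<Longrightarrow> t = t'"
proof (rule ccontr)
  assume e: "gqu j p t = gqu j p' t'" and ne: "t \<noteq> t'"
  then have "gg * ((2 * real p + 1) / 2 ^ (t + 1)) = gg * ((2 * real p' + 1) / 2 ^ (t' + 1))"
    by (simp add: gqu_def)
  then have "(2 * real p + 1) / 2 ^ (t + 1) = (2 * real p' + 1) / 2 ^ (t' + 1)" using gg_pos
    by (metis mult_cancel_left less_irrefl)
  then show False using odd_dyadic_ne[OF ne] by blast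
qed

lemma ph_inj: "inj_on ph A"
proof (rule inj_onI)
  fix a b assume "ph a = ph b"
  then show "a = b" using ph_mono[of a b] ph_mono[of b a] by (metis less_irrefl nat_neq_iff)
qed

lemma distinct_form:
  assumes j: "j \<le> L - 2" and pp: "\<forall>t<M. pp t < 2 ^ t"
  shows "distinct (map ph [0..<K] @ map (\<lambda>t. gqu j (pp t) t) [0..<M])"
proof -
  have d1: "distinct (map ph [0..<K])" using ph_inj by (simp add: distinct_map)
  have "inj_on (\<lambda>t. gqu j (pp t) t) (set [0..<M])"
    by (rule inj_onI) (rule gqu_inj)
  then have d2: "distinct (map (\<lambda>t. gqu j (pp t) t) [0..<M])" by (simp add: distinct_map)
  have d3: "ph m \<noteq> gqu j (pp t) t" if "m < K" "t < M" for m t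
  proof -
    have b: "real j * dd + eps < gqu j (pp t) t" "gqu j (pp t) t < real (j + 1) * dd"
      using gqu_bounds[of "pp t" t j] pp that by auto
    show ?thesis
    proof (cases "m \<le> 2 * j")
      case True
      then have "ph m \<le> ph (2 * j)" by (rule ph_mono_le)
      then show ?thesis using b by (simp add: ph_even)
    next
      case False
      then have "ph (2 * j + 1) \<le> ph m" by (intro ph_mono_le) simp
      then show ?thesis using b ph_odd[of j] by simp
    qed
  qed
  have "set (map ph [0..<K]) \<inter> set (map (\<lambda>t. gqu j (pp t) t) [0..<M]) = {}"
    using d3 by auto
  then show ?thesis using d1 d2 by simp
qed

lemma seed_j: "y \<in> {1..Yc} \<Longrightarrow> (y - 1) div 2 ^ M \<le> L - 2"
proof -
  assume y: "y \<in> {1..Yc}"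
  then have "y - 1 < (L - 1) * 2 ^ M" by (auto simp: Yc_def)
  then have "(y - 1) div 2 ^ M < L - 1" by (rule less_mult_imp_div_less)
  then show ?thesis by simp
qed

lemma seed_p: "t \<le> M \<Longrightarrow> (n::nat) mod 2 ^ M div 2 ^ (M - t) < 2 ^ t"
proof -
  assume t: "t \<le> M"
  have "n mod 2 ^ M < 2 ^ M" by simp
  also have "(2::nat) ^ M = 2 ^ t * 2 ^ (M - t)" using t by (simp add: power_add[symmetric])
  finally show ?thesis by (rule less_mult_imp_div_less)
qed

lemma Pp_less:
  assumes lo: "real j * dd + eps \<le> x" and hi: "x < real (j + 1) * dd"
  shows "Pp x j t < 2 ^ t"
proof -
  have "x - (real j * dd + eps) < gg" using hi by (simp add: gg_def algebra_simps)
  then have t1: "thx x j < 1" "thx x j \<ge> 0" using gg_pos lo by (simp_all add: thx_def divide_less_eq)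
  then have "2 ^ t * thx x j < 2 ^ t" by simp
  then have "\<lfloor>2 ^ t * thx x j\<rfloor> < 2 ^ t" by (metis floor_less_iff of_int_numeral of_int_power)
  then show ?thesis unfolding Pp_def using t1 by (simp add: nat_less_iff)
qed

lemma Pp_div:
  assumes lo: "real j * dd + eps \<le> x" and t: "t \<le> M"
  shows "Pp x j M div 2 ^ (M - t) = Pp x j t"
proof -
  have th: "thx x j \<ge> 0" using lo gg_pos by (simp add: thx_def)
  have p: "(2::real) ^ M = 2 ^ t * 2 ^ (M - t)" using t by (simp add: power_add[symmetric])
  have "\<lfloor>2 ^ M * thx x j\<rfloor> div 2 ^ (M - t) = \<lfloor>2 ^ M * thx x j / real_of_int (2 ^ (M - t))\<rfloor>"
    by (rule floor_divide_real_eq_div[symmetric]) simp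
  also have "2 ^ M * thx x j / real_of_int (2 ^ (M - t)) = 2 ^ t * thx x j" using p by simp
  finally have e: "\<lfloor>2 ^ M * thx x j\<rfloor> div 2 ^ (M - t) = \<lfloor>2 ^ t * thx x j\<rfloor>" .
  have "Pp x j M div 2 ^ (M - t) = nat \<lfloor>2 ^ M * thx x j\<rfloor> div nat (2 ^ (M - t))"
    by (simp add: Pp_def nat_power_eq)
  also have "\<dots> = nat (\<lfloor>2 ^ M * thx x j\<rfloor> div 2 ^ (M - t))" using th by (simp add: nat_div_distrib)
  also have "\<dots> = Pp x j t" using e by (simp add: Pp_def)
  finally show ?thesis .
qed

end



context upc
begin

lemma odd_lt_K: "odd k \<Longrightarrow> k \<le> K \<Longrightarrow> k < K"
proof (rule ccontr)
  assume "odd k" "k \<le> K" "\<not> k < K"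
  then have "k = K" by simp
  then show False using \<open>odd k\<close> K_even by simp
qed

lemma Yc_pos: "Yc \<ge> 1" using L2 by (simp add: Yc_def)

lemma qfu_range: "y \<in> {1..Yc} \<Longrightarrow> length rs < NN \<Longrightarrow> qfu y rs \<in> {0..<1}"
proof -
  assume y: "y \<in> {1..Yc}" and len: "length rs < NN"
  show "qfu y rs \<in> {0..<1}"
  proof (cases "length rs < K")
    case True
    then show ?thesis using ph_nonneg ph_lt1 by (simp add: qfu_def)
  next
    case False
    define k where "k = cnt rs"
    define t where "t = length rs - K"
    have tM: "t < M" using len False by (simp add: t_def NN_def)
    have kK: "k \<le> K" unfolding k_def by (rule cnt_le)
    show ?thesis
    proof (cases "odd k")
      case True
      then have "k < K" using kK by (rule odd_lt_K)
      then have j: "(k - 1) div 2 \<le> L - 2" using K_even by simp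
      have "length (drop K rs) = t" by (simp add: t_def)
      then have p: "pbits (drop K rs) < 2 ^ t" using pbits_less by metis
      have "qfu y rs = gqu ((k - 1) div 2) (pbits (drop K rs)) t"
        using qfu_at[of rs k y] False True by (simp add: k_def t_def)
      then show ?thesis using gqu_01[OF j p] by simp
    next
      case False2: False
      have "qfu y rs = gqu ((y - 1) div 2 ^ M) (((y - 1) mod 2 ^ M) div 2 ^ (M - t)) t"
        using qfu_at[of rs k y] False False2 by (simp add: k_def t_def)
      then show ?thesis using gqu_01[OF seed_j[OF y] seed_p] tM by simp
    qed
  qed
qed

lemma estu_range: "length rs = NN \<Longrightarrow> estu y rs \<in> {0..<1}"
proof -
  assume len: "length rs = NN"
  define k where "k = cnt rs"
  have kK: "k \<le> K" unfolding k_def by (rule cnt_le)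
  show ?thesis
  proof (cases "odd k")
    case True
    then have "k < K" using kK by (rule odd_lt_K)
    then have j: "(k - 1) div 2 \<le> L - 2" using K_even by simp
    have "length (drop K rs) = M" using len by (simp add: NN_def)
    then have p: "pbits (drop K rs) < 2 ^ M" using pbits_less by metis
    have "estu y rs = gqu ((k - 1) div 2) (pbits (drop K rs)) M"
      using True by (simp add: estu_def k_def)
    then show ?thesis using gqu_01[OF j p] by simp
  next
    case False
    have e: "estu y rs = real (k div 2) * dd + eps / 2" using False by (simp add: estu_def k_def Let_def)
    have "k div 2 \<le> L - 1" using kK K_even by simp
    then have r: "real (k div 2) \<le> real (L - 1)" by simp
    have dd0: "dd \<ge> 0" using dd_pos eps by linarith
    from r dd0 have m: "real (k div 2) * dd \<le> real (L - 1) * dd" by (rule mult_right_mono)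
    have n: "real (k div 2) * dd \<ge> 0" using dd0 by simp
    show ?thesis unfolding e atLeastLessThan_iff using m n dd_last eps by linarith
  qed
qed

lemma odd_j: "odd (\<kappa>::nat) \<Longrightarrow> \<kappa> = 2 * ((\<kappa> - 1) div 2) + 1"
proof -
  assume "odd \<kappa>"
  then obtain m where "\<kappa> = 2 * m + 1" by (rule oddE)
  then show ?thesis by simp
qed

lemma qfu_distinct:
  assumes x: "x \<in> {0..<1}" and y: "y \<in> {1..Yc}"
  shows "distinct (queries qfu NN x y)"
proof -
  obtain \<kappa> where kK: "\<kappa> \<le> K" and ch: "\<forall>i<K. (ph i \<le> x) = (i < \<kappa>)" using kappa_ex by blast
  note cl = classify[OF _ _ kK ch]
  show ?thesis
  proof (cases "odd \<kappa>")
    case True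
    define j where "j = (\<kappa> - 1) div 2"
    have kj: "\<kappa> = 2 * j + 1" unfolding j_def using True by (rule odd_j)
    have b: "real j * dd + eps \<le> x" "x < real (j + 1) * dd" "\<kappa> < K" using cl x True by (auto simp: j_def)
    have ch': "\<forall>i<K. (ph i \<le> x) = (i < 2 * j + 1)" using ch kj by simp
    have "queries qfu NN x y = map ph [0..<K] @ map (\<lambda>t. gqu j (Pp x j t) t) [0..<M]"
      using queries_gap[OF _ ch' b(1,2)] kK kj by simp
    moreover have "j \<le> L - 2" using b(3) kj K_even by simp
    ultimately show ?thesis using distinct_form[of j "Pp x j"] Pp_less[OF b(1,2)] by simp
  next
    case False
    have "queries qfu NN x y = map ph [0..<K] @
       map (\<lambda>t. gqu ((y - 1) div 2 ^ M) (((y - 1) mod 2 ^ M) div 2 ^ (M - t)) t) [0..<M]"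
      by (rule queries_decoy[OF kK ch False[simplified]])
    moreover have "\<forall>t<M. ((y - 1) mod 2 ^ M) div 2 ^ (M - t) < 2 ^ t" using seed_p by simp
    then have "distinct (map ph [0..<K] @
       map (\<lambda>t. gqu ((y - 1) div 2 ^ M) (((y - 1) mod 2 ^ M) div 2 ^ (M - t)) t) [0..<M])"
      by (rule distinct_form[OF seed_j[OF y]])
    ultimately show ?thesis by simp
  qed
qed

lemma qfu_strategy: "is_strategy NN Yc qfu estu"
  unfolding is_strategy_def
proof (intro conjI ballI allI impI)
  show "1 \<le> Yc" by (rule Yc_pos)
next
  fix y :: nat and rs :: "bool list" assume "y \<in> {1..Yc}" "length rs < NN"
  then show "qfu y rs \<in> {0..<1}" by (rule qfu_range)
next
  fix y :: nat and rs :: "bool list" assume "length rs = NN"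
  then show "estu y rs \<in> {0..<1}" by (rule estu_range)
next
  fix x :: real and y :: nat assume "x \<in> {0..<1}" "y \<in> {1..Yc}"
  then show "distinct (queries qfu NN x y)" by (rule qfu_distinct)
qed

lemma qfu_acc: "x \<in> {0..<1} \<Longrightarrow> \<bar>estimate qfu estu NN x y - x\<bar> \<le> eps / 2"
proof -
  assume x: "x \<in> {0..<1}"
  obtain \<kappa> where kK: "\<kappa> \<le> K" and ch: "\<forall>i<K. (ph i \<le> x) = (i < \<kappa>)" using kappa_ex by blast
  note cl = classify[OF _ _ kK ch]
  show ?thesis
  proof (cases "odd \<kappa>")
    case True
    define j where "j = (\<kappa> - 1) div 2"
    have kj: "\<kappa> = 2 * j + 1" unfolding j_def using True by (rule odd_j)
    have b: "real j * dd + eps \<le> x" "x < real (j + 1) * dd" using cl x True by (auto simp: j_def)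
    have ch': "\<forall>i<K. (ph i \<le> x) = (i < 2 * j + 1)" using ch kj by simp
    have "estimate qfu estu NN x y = gqu j (Pp x j M) M"
      using est_gap[OF _ ch' b] kK kj by simp
    then show ?thesis using acc_gap[OF b] by simp
  next
    case False
    have "estimate qfu estu NN x y = real (\<kappa> div 2) * dd + eps / 2" by (rule est_decoy[OF kK ch False[simplified]])
    moreover have "real (\<kappa> div 2) * dd \<le> x" "x < real (\<kappa> div 2) * dd + eps" using cl x False by auto
    ultimately show ?thesis unfolding abs_le_iff by linarith
  qed
qed

end



context upc
begin

lemma decoy_char:
  assumes i: "i < L"
  shows "\<forall>m<K. (ph m \<le> real i * dd) = (m < 2 * i)"
proof (intro allI impI)
  fix m assume m: "m < K"
  show "(ph m \<le> real i * dd) = (m < 2 * i)"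
  proof (cases "m < 2 * i")
    case True
    then obtain i' where i': "i = Suc i'" by (cases i) auto
    then have "m \<le> 2 * i' + 1" using True by simp
    then have "ph m \<le> ph (2 * i' + 1)" by (rule ph_mono_le)
    also have "\<dots> = real i * dd" using i' ph_odd[of i'] by simp
    finally show ?thesis using True by simp
  next
    case False
    then have "ph (2 * i) \<le> ph m" by (intro ph_mono_le) simp
    then show ?thesis using False eps by (simp add: ph_even)
  qed
qed

lemma qfu_cover:
  assumes x: "x \<in> {0..<1}" and q: "q \<in> Qset NN Yc qfu x"
  shows "cover_number (1 / real L) (info_set NN Yc qfu q) \<ge> L"
proof -
  obtain y where y: "y \<in> {1..Yc}" "q = queries qfu NN x y" using q by (auto simp: Qset_def)
  define D where "D = (\<lambda>y'. map ph [0..<K] @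
     map (\<lambda>t. gqu ((y' - 1) div 2 ^ M) (((y' - 1) mod 2 ^ M) div 2 ^ (M - t)) t) [0..<M])"
  define c where "c = (\<lambda>i. real i * dd)"
  have cq: "queries qfu NN (c i) y' = D y'" if i: "i < L" for i y'
  proof -
    have "2 * i \<le> K" using i K_even by simp
    then show ?thesis unfolding c_def D_def using decoy_char[OF i] by (intro queries_decoy) auto
  qed
  have ex: "\<exists>y'\<in>{1..Yc}. D y' = q"
  proof -
    obtain \<kappa> where kK: "\<kappa> \<le> K" and ch: "\<forall>i<K. (ph i \<le> x) = (i < \<kappa>)" using kappa_ex by blast
    note cl = classify[OF _ _ kK ch]
    show ?thesis
    proof (cases "odd \<kappa>")
      case False
      have "q = D y" unfolding y(2) D_def by (rule queries_decoy[OF kK ch False[simplified]])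
      then show ?thesis using y(1) by blast
    next
      case True
      define j where "j = (\<kappa> - 1) div 2"
      have kj: "\<kappa> = 2 * j + 1" unfolding j_def using True by (rule odd_j)
      have b: "real j * dd + eps \<le> x" "x < real (j + 1) * dd" "\<kappa> < K" using cl x True by (auto simp: j_def)
      have ch': "\<forall>i<K. (ph i \<le> x) = (i < 2 * j + 1)" using ch kj by simp
      have qg: "q = map ph [0..<K] @ map (\<lambda>t. gqu j (Pp x j t) t) [0..<M]"
        unfolding y(2) using queries_gap[OF _ ch' b(1,2)] kK kj by simp
      define P where "P = Pp x j M"
      have PM: "P < 2 ^ M" unfolding P_def by (rule Pp_less[OF b(1,2)])
      define y' where "y' = j * 2 ^ M + P + 1"
      have jL: "j \<le> L - 2" using b(3) kj K_even by simp
      have y'1: "(y' - 1) div 2 ^ M = j" using PM by (simp add: y'_def)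
      have y'2: "(y' - 1) mod 2 ^ M = P" using PM by (simp add: y'_def)
      have mc: "map (\<lambda>t. gqu j (P div 2 ^ (M - t)) t) [0..<M] = map (\<lambda>t. gqu j (Pp x j t) t) [0..<M]"
      proof (rule map_cong[OF refl])
        fix t assume "t \<in> set [0..<M]"
        then have "t \<le> M" by simp
        then have "P div 2 ^ (M - t) = Pp x j t" unfolding P_def by (rule Pp_div[OF b(1)])
        then show "gqu j (P div 2 ^ (M - t)) t = gqu j (Pp x j t) t" by simp
      qed
      have "D y' = q" unfolding qg D_def y'1 y'2 using mc by simp
      moreover have "y' \<in> {1..Yc}"
      proof -
        have a1: "j * 2 ^ M \<le> (L - 2) * 2 ^ M" using jL by (rule mult_le_mono1)
        have a2: "P + 1 \<le> 2 ^ M" using PM by simp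
        have "j * 2 ^ M + P + 1 \<le> (L - 2) * 2 ^ M + 2 ^ M" using a1 a2 by linarith
        also have "L - 1 = (L - 2) + 1" using L2 by simp
        then have "(L - 2) * 2 ^ M + 2 ^ M = (L - 1) * (2::nat) ^ M" by (simp add: algebra_simps)
        finally show ?thesis by (simp add: y'_def Yc_def)
      qed
      ultimately show ?thesis by blast
    qed
  qed
  have cin: "\<forall>i<L. c i \<in> info_set NN Yc qfu q"
  proof (intro allI impI)
    fix i assume i: "i < L"
    have "c i \<ge> 0" using dd_pos eps by (simp add: c_def)
    moreover have "c i < 1"
    proof -
      have dd0: "dd \<ge> 0" using dd_pos eps by linarith
      have "real i \<le> real (L - 1)" using i by simp
      then have "c i \<le> real (L - 1) * dd" unfolding c_def using dd0 by (rule mult_right_mono)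
      then show ?thesis using dd_last eps by linarith
    qed
    moreover have "q \<in> Qset NN Yc qfu (c i)"
      using ex cq[OF i] by (auto simp: Qset_def)
    ultimately show "c i \<in> info_set NN Yc qfu q" by (simp add: info_set_def)
  qed
  have gap: "\<forall>i j. i < j \<longrightarrow> j < L \<longrightarrow> c j - c i > 1 / real L"
  proof (intro allI impI)
    fix i j :: nat assume ij: "i < j" "j < L"
    have "c j - c i = real (j - i) * dd" using ij by (simp add: c_def of_nat_diff algebra_simps)
    moreover have "real (j - i) \<ge> 1" using ij by simp
    moreover have "dd \<ge> 0" using dd_pos eps by linarith
    ultimately have "c j - c i \<ge> 1 * dd" using mult_right_mono[of 1 "real (j - i)" dd] by simp
    then show "c j - c i > 1 / real L" using dd_gt by linarith
  qed
  have E01: "info_set NN Yc qfu q \<subseteq> {0..<1}" by (auto simp: info_set_def)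
  have L1': "L \<ge> 1" using L2 by simp
  have cv: "cov (1 / real L) (info_set NN Yc qfu q) L" by (rule cov_unit[OF E01 L1'])
  show ?thesis by (rule cover_number_ge[OF cv cin gap])
qed

lemma upc_ok: "\<exists>Yc qf est. is_strategy NN Yc qf est \<and> is_private eps (1 / real L) L NN Yc qf est"
proof (intro exI conjI)
  show "is_strategy NN Yc qfu estu" by (rule qfu_strategy)
  show "is_private eps (1 / real L) L NN Yc qfu estu"
    unfolding is_private_def using qfu_acc qfu_cover by blast
qed

end



lemma pow_ge_of_log:
  fixes z :: real
  assumes "z > 0" "log 2 z \<le> real M"
  shows "z \<le> 2 ^ M"
proof -
  have "z = 2 powr (log 2 z)" using assms(1) by simp
  also have "\<dots> \<le> 2 powr (real M)" using assms(2) by (intro powr_mono) auto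
  also have "\<dots> = 2 ^ M" by (simp add: powr_realpow)
  finally show ?thesis .
qed

lemma Nstar_facts:
  fixes \<epsilon> :: real and L M :: nat
  assumes eps: "\<epsilon> > 0" and L: "L \<ge> 2" and small: "2 * \<epsilon> < 1 / real L"
    and gM: "(1 - \<epsilon>) / real (L - 1) - \<epsilon> \<le> 2 ^ M * \<epsilon>"
  shows "Nstar \<epsilon> (1 / real L) L \<le> 2 * L - 2 + M"
    and "real (Nstar \<epsilon> (1 / real L) L) + 4 - 2 * real L > log 2 (1 / (real L * \<epsilon>))"
    and "2 ^ Nstar \<epsilon> (1 / real L) L * \<epsilon> \<ge> 1"
proof -
  have Le: "real L * \<epsilon> < 1"
  proof -
    have "real L * (2 * \<epsilon>) < real L * (1 / real L)" using small L by (intro mult_strict_left_mono) auto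
    then have "2 * (real L * \<epsilon>) < 1" using L by (simp add: algebra_simps)
    moreover have "real L * \<epsilon> > 0" using eps L by simp
    ultimately show ?thesis by linarith
  qed
  interpret upc \<epsilon> L M using eps L Le gM by unfold_locales auto
  define P where "P = (\<lambda>N. \<exists>Yc qf est. is_strategy N Yc qf est \<and> is_private \<epsilon> (1 / real L) L N Yc qf est)"
  have ex: "P NN" unfolding P_def by (rule upc_ok)
  have ns: "Nstar \<epsilon> (1 / real L) L = (LEAST N. P N)" by (simp add: Nstar_def P_def)
  show "Nstar \<epsilon> (1 / real L) L \<le> 2 * L - 2 + M"
    unfolding ns using Least_le[of P NN] ex by (simp add: NN_def K_def)
  have "P (LEAST N. P N)" using ex by (rule LeastI)
  then obtain Yc' qf est where st: "is_strategy (Nstar \<epsilon> (1 / real L) L) Yc' qf est"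
      and pr: "is_private \<epsilon> (1 / real L) L (Nstar \<epsilon> (1 / real L) L) Yc' qf est"
    unfolding P_def ns by blast
  have lm: "real (Nstar \<epsilon> (1 / real L) L) + 4 - 2 * real L > log 2 ((1 / real L) / \<epsilon>)
      \<and> 2 ^ Nstar \<epsilon> (1 / real L) L * \<epsilon> \<ge> 1"
    by (rule lower_main[OF st pr eps L refl small])
  then show "real (Nstar \<epsilon> (1 / real L) L) + 4 - 2 * real L > log 2 (1 / (real L * \<epsilon>))"
    by (simp add: divide_divide_eq_left)
  show "2 ^ Nstar \<epsilon> (1 / real L) L * \<epsilon> \<ge> 1" using lm by simp
qed

theorem corollary1:
  fixes \<epsilon> :: real and L :: nat
  assumes "\<epsilon> > 0" and "L \<ge> 2" and "2 * \<epsilon> < 1 / real L"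
  shows "(L = 2 \<longrightarrow>
            of_int \<lceil>log 2 (1 / \<epsilon>)\<rceil> \<le> real (Nstar \<epsilon> (1 / real L) L) \<and>
            real (Nstar \<epsilon> (1 / real L) L) \<le> of_int \<lceil>log 2 (1 / \<epsilon>)\<rceil> + 4) \<and>
         (L \<ge> 3 \<longrightarrow>
            of_int \<lceil>log 2 (1 / (real L * \<epsilon>))\<rceil> + 2 * real L - 4 \<le> real (Nstar \<epsilon> (1 / real L) L) \<and>
            real (Nstar \<epsilon> (1 / real L) L) \<le> of_int \<lceil>log 2 (1 / (real L * \<epsilon>))\<rceil> + 2 * real L)"
proof (intro conjI impI)
  assume L2: "L = 2"
  define m where "m = \<lceil>log 2 (1 / \<epsilon>)\<rceil>"
  have e4: "\<epsilon> < 1 / 4" using assms(3) L2 by simp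
  have "1 / \<epsilon> > 4" using e4 assms(1) by (simp add: field_simps)
  then have "log 2 (1 / \<epsilon>) > log 2 4" using assms(1) by (subst log_less_cancel_iff) auto
  moreover have "log 2 (4::real) = 2" using log_pow_cancel[of 2 2] by simp
  ultimately have lpos: "log 2 (1 / \<epsilon>) > 0" by simp
  then have m0: "m \<ge> 0" by (simp add: m_def)
  define M where "M = nat m"
  have rM: "real M = of_int m" using m0 by (simp add: M_def)
  have "log 2 (1 / \<epsilon>) \<le> real M" using rM by (simp add: m_def)
  then have pw: "1 / \<epsilon> \<le> 2 ^ M" using assms(1) by (intro pow_ge_of_log) auto
  have gM: "(1 - \<epsilon>) / real (L - 1) - \<epsilon> \<le> 2 ^ M * \<epsilon>"
  proof -
    have "1 \<le> 2 ^ M * \<epsilon>" using pw assms(1) by (simp add: divide_le_eq)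
    then show ?thesis using L2 assms(1) by simp
  qed
  note F = Nstar_facts[OF assms gM]
  have "real (Nstar \<epsilon> (1 / real L) L) \<le> real (2 * L - 2 + M)" using F(1) by (simp only: of_nat_le_iff)
  then show "real (Nstar \<epsilon> (1 / real L) L) \<le> of_int \<lceil>log 2 (1 / \<epsilon>)\<rceil> + 4"
    using L2 rM by (simp add: m_def)
  have "1 / \<epsilon> \<le> 2 ^ Nstar \<epsilon> (1 / real L) L" using F(3) assms(1) by (simp add: divide_le_eq)
  then have "log 2 (1 / \<epsilon>) \<le> log 2 (2 ^ Nstar \<epsilon> (1 / real L) L)"
    using assms(1) by (subst log_le_cancel_iff) auto
  then have "log 2 (1 / \<epsilon>) \<le> real (Nstar \<epsilon> (1 / real L) L)" by simp
  then have "\<lceil>log 2 (1 / \<epsilon>)\<rceil> \<le> int (Nstar \<epsilon> (1 / real L) L)" by (simp add: ceiling_le_iff)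
  then have "real_of_int \<lceil>log 2 (1 / \<epsilon>)\<rceil> \<le> real_of_int (int (Nstar \<epsilon> (1 / real L) L))"
    by (simp only: of_int_le_iff)
  then show "of_int \<lceil>log 2 (1 / \<epsilon>)\<rceil> \<le> real (Nstar \<epsilon> (1 / real L) L)" by simp
next
  assume L3: "L \<ge> 3"
  define m where "m = \<lceil>log 2 (1 / (real L * \<epsilon>))\<rceil>"
  have Lpos: "real L > 0" using L3 by simp
  have "real L * (2 * \<epsilon>) < 1" using assms(3) Lpos by (simp add: field_simps)
  then have "1 / (real L * \<epsilon>) > 2" using assms(1) Lpos by (simp add: field_simps)
  then have "log 2 (1 / (real L * \<epsilon>)) > log 2 2" using assms(1) Lpos by (subst log_less_cancel_iff) auto
  then have lpos: "log 2 (1 / (real L * \<epsilon>)) > 0" by simp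
  then have m0: "m \<ge> 0" by (simp add: m_def)
  define M where "M = nat m + 1"
  have rM: "real M = of_int m + 1" using m0 by (simp add: M_def)
  have "log 2 (1 / (real L * \<epsilon>)) \<le> real (nat m)" using m0 by (simp add: m_def)
  then have pw: "1 / (real L * \<epsilon>) \<le> 2 ^ nat m" using assms(1) Lpos by (intro pow_ge_of_log) auto
  have gM: "(1 - \<epsilon>) / real (L - 1) - \<epsilon> \<le> 2 ^ M * \<epsilon>"
  proof -
    have L1: "real (L - 1) = real L - 1" using L3 by simp
    have d: "real L - 1 > 0" using L3 by simp
    have "(1 - \<epsilon>) / (real L - 1) \<le> 1 / (real L - 1)" using d assms(1) by (intro divide_right_mono) auto
    then have "(1 - \<epsilon>) / real (L - 1) - \<epsilon> \<le> 1 / (real L - 1)"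
      using assms(1) L1 by simp
    also have "\<dots> \<le> 2 / real L" using L3 by (simp add: field_simps)
    also have "2 / real L = 2 * (1 / (real L * \<epsilon>)) * \<epsilon>" using assms(1) Lpos by (simp add: field_simps)
    also have "\<dots> \<le> 2 * 2 ^ nat m * \<epsilon>"
    proof (rule mult_right_mono)
      show "2 * (1 / (real L * \<epsilon>)) \<le> 2 * 2 ^ nat m" using pw by simp
      show "0 \<le> \<epsilon>" using assms(1) by simp
    qed
    also have "\<dots> = 2 ^ M * \<epsilon>" by (simp add: M_def)
    finally show ?thesis .
  qed
  have L2': "L \<ge> 2" using L3 by simp
  note F = Nstar_facts[OF assms gM]
  have "real (Nstar \<epsilon> (1 / real L) L) \<le> real (2 * L - 2 + M)" using F(1) by (simp only: of_nat_le_iff)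
  then show "real (Nstar \<epsilon> (1 / real L) L) \<le> of_int \<lceil>log 2 (1 / (real L * \<epsilon>))\<rceil> + 2 * real L"
    using L3 rM by (simp add: m_def of_nat_diff)
  have "log 2 (1 / (real L * \<epsilon>)) < real (Nstar \<epsilon> (1 / real L) L) + 4 - 2 * real L" using F(2) by simp
  then have "m \<le> int (Nstar \<epsilon> (1 / real L) L) + 4 - 2 * int L"
    unfolding m_def by (subst ceiling_le_iff) simp
  then have "real_of_int m \<le> real_of_int (int (Nstar \<epsilon> (1 / real L) L) + 4 - 2 * int L)"
    by (simp only: of_int_le_iff)
  then have "real_of_int m \<le> real (Nstar \<epsilon> (1 / real L) L) + 4 - 2 * real L" by simp
  then show "of_int \<lceil>log 2 (1 / (real L * \<epsilon>))\<rceil> + 2 * real L - 4 \<le> real (Nstar \<epsilon> (1 / real L) L)"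
    by (simp add: m_def)
qed


end
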